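(* Let $U$ be the unipotent radical of a Borel subgroup of ${\mathrm{Sp}}(4)$. Then \[\mathrm{H}(\mathcal{O}(\mathcal{C}({\mathrm{Sp}}(4)))^{U\times U};t)=\frac{1}{(1-t)(1-t^2)^2}.\]
   Context: ${\mathrm{Sp}}(4)=\{M\in\mathbb{C}^{4\times4}\mid M^TJM=J\}$ where $J$ is block diagonal with two blocks $\begin{pmatrix}0&1\\-1&0\end{pmatrix}$. The cone $\mathcal{C}({\mathrm{Sp}}(4))$ is the Zariski closure in $\mathbb{C}^{4\times4}$ of $\{cM\mid c\in\mathbb{C},M\in{\mathrm{Sp}}(4)\}$, with coordinate ring graded as a quotient of the standard graded polynomial ring by the homogeneous vanishing ideal. ${\mathrm{Sp}}(4)\times{\mathrm{Sp}}(4)$ acts by $(g,h)\cdot M=gMh^{-1}$, hence on the coordinate ring; $A^{U\times U}$ denotes the graded subalgebra of $U\times U$-invariants. The Hilbert series of $A=\bigoplus_dA_d$ is $\sum_d\dim_{\mathbb{C}}(A_d)t^d$. *)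

theory Defs
  imports "HOL-Analysis.Analysis" "HOL-Library.Function_Algebras"
    "HOL-Computational_Algebra.Formal_Power_Series"
begin

type_synonym mat4 = "complex^4^4"

text \<open>Indices of type 4 are 0,1,2,3 (standing for 1,2,3,4 of the paper).
  J is block diagonal with two blocks [[0,1],[-1,0]].\<close>
definition J4 :: mat4 where
  "J4 = (\<chi> i j. if i = 0 \<and> j = 1 then 1 else if i = 1 \<and> j = 0 then -1
             else if i = 2 \<and> j = 3 then 1 else if i = 3 \<and> j = 2 then -1 else 0)"

definition Sp4 :: "mat4 set" where
  "Sp4 = {M. transpose M ** J4 ** M = J4}"

inductive polyfun :: "(mat4 \<Rightarrow> complex) \<Rightarrow> bool" where
  pf_const: "polyfun (\<lambda>_. c)"
| pf_coord: "polyfun (\<lambda>M. M $ i $ j)"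
| pf_add: "polyfun f \<Longrightarrow> polyfun g \<Longrightarrow> polyfun (\<lambda>M. f M + g M)"
| pf_mult: "polyfun f \<Longrightarrow> polyfun g \<Longrightarrow> polyfun (\<lambda>M. f M * g M)"

inductive hpoly :: "nat \<Rightarrow> (mat4 \<Rightarrow> complex) \<Rightarrow> bool" where
  hp_const: "hpoly 0 (\<lambda>_. c)"
| hp_coord: "hpoly 1 (\<lambda>M. M $ i $ j)"
| hp_add: "hpoly d f \<Longrightarrow> hpoly d g \<Longrightarrow> hpoly d (\<lambda>M. f M + g M)"
| hp_mult: "hpoly d f \<Longrightarrow> hpoly e g \<Longrightarrow> hpoly (d + e) (\<lambda>M. f M * g M)"

definition zariski_closure :: "mat4 set \<Rightarrow> mat4 set" where
  "zariski_closure S = {x. \<forall>p. polyfun p \<longrightarrow> (\<forall>y\<in>S. p y = 0) \<longrightarrow> p x = 0}"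

definition coneSp4 :: "mat4 set" where
  "coneSp4 = zariski_closure {(\<chi> i j. c * M $ i $ j) | c M. M \<in> Sp4}"

text \<open>Unipotent radical of the Borel subgroup of Sp(4) stabilising the isotropic flag
  <e1> < <e1,e3> < <e1,e3,e4> < C^4: g e1 = e1, g e3 in e3 + <e1>,
  g e4 in e4 + <e1,e3>, g e2 in e2 + <e1,e3,e4> (column j of g is g e_j).\<close>
definition USp4 :: "mat4 set" where
  "USp4 = {g \<in> Sp4.
     g$0$0 = 1 \<and> g$1$0 = 0 \<and> g$2$0 = 0 \<and> g$3$0 = 0 \<and>
     g$1$2 = 0 \<and> g$2$2 = 1 \<and> g$3$2 = 0 \<and>
     g$1$3 = 0 \<and> g$3$3 = 1 \<and>
     g$1$1 = 1}"

text \<open>Degree d part of the coordinate ring of the cone: (S/I)_d = S_d / I_d, realised as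
  the space of restrictions to the cone of forms of degree d (extended by 0 off the cone).\<close>
definition coord_ring_deg :: "nat \<Rightarrow> (mat4 \<Rightarrow> complex) set" where
  "coord_ring_deg d = {(\<lambda>M. if M \<in> coneSp4 then f M else 0) | f. hpoly d f}"

definition inv_deg :: "nat \<Rightarrow> (mat4 \<Rightarrow> complex) set" where
  "inv_deg d = {F \<in> coord_ring_deg d. \<forall>g\<in>USp4. \<forall>h\<in>USp4. \<forall>M\<in>coneSp4.
      F (matrix_inv g ** M ** h) = F M}"

definition cdim :: "(mat4 \<Rightarrow> complex) set \<Rightarrow> nat" where
  "cdim V = vector_space.dim (\<lambda>(c::complex) (f::mat4 \<Rightarrow> complex) x. c * f x) V"

definition hilbert_series_inv :: "rat fps" where
  "hilbert_series_inv = Abs_fps (\<lambda>d. of_nat (cdim (inv_deg d)))"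

end

theory Submission
  imports Defs "HOL-Computational_Algebra.Polynomial"
begin

lemma UNIV4: "(UNIV::4 set) = {0,1,2,3}"
proof -
  have "(4::4) = 0" by simp
  then show ?thesis using UNIV_4 by auto
qed

lemma sum4: "sum f (UNIV::4 set) = f 0 + f 1 + f 2 + f 3"
  unfolding UNIV4 by (simp add: ac_simps)

lemma all4: "(\<forall>i::4. P i) \<longleftrightarrow> P 0 \<and> P 1 \<and> P 2 \<and> P 3"
proof -
  have "(\<forall>i::4. P i) \<longleftrightarrow> (\<forall>i\<in>UNIV. P i)" by simp
  also have "\<dots> \<longleftrightarrow> (\<forall>i\<in>{0,1,2,3}. P i)" unfolding UNIV4 ..
  finally show ?thesis by simp
qed

lemma mmul: "(A ** B) $ i $ j = A$i$0 * B$0$j + A$i$1 * B$1$j + A$i$2 * B$2$j + A$i$3 * B$3$j"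
  for A B :: mat4
  by (simp add: matrix_matrix_mult_def sum4)

lemma J4_nth: "J4 $ i $ j = (if i = 0 \<and> j = 1 then 1 else if i = 1 \<and> j = 0 then -1
             else if i = 2 \<and> j = 3 then 1 else if i = 3 \<and> j = 2 then -1 else 0)"
  by (simp add: J4_def)

definition omf :: "mat4 \<Rightarrow> 4 \<Rightarrow> 4 \<Rightarrow> complex" where
  "omf M i j = M$0$i*M$1$j - M$1$i*M$0$j + M$2$i*M$3$j - M$3$i*M$2$j"

lemma om_entry: "(transpose M ** J4 ** M) $ i $ j = omf M i j"
  by (simp add: mmul J4_nth transpose_def omf_def algebra_simps)

definition smat :: "complex \<Rightarrow> mat4 \<Rightarrow> mat4" where
  "smat c A = (\<chi> i j. c * A$i$j)"

definition gsp :: "complex \<Rightarrow> mat4 \<Rightarrow> bool" where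
  "gsp l M \<longleftrightarrow> transpose M ** J4 ** M = smat l J4"

lemma gsp_entry: "gsp l M \<longleftrightarrow> (\<forall>i j. omf M i j = l * J4$i$j)"
  by (simp add: gsp_def vec_eq_iff om_entry smat_def)

lemma omf_diag: "omf M i i = 0" by (simp add: omf_def)
lemma omf_anti: "omf M j i = - omf M i j" by (simp add: omf_def algebra_simps)

lemma gsp_iff: "gsp l M \<longleftrightarrow> omf M 0 1 = l \<and> omf M 2 3 = l \<and> omf M 0 2 = 0 \<and> omf M 0 3 = 0
   \<and> omf M 1 2 = 0 \<and> omf M 1 3 = 0"
  unfolding gsp_entry all4
  by (simp add: J4_nth omf_diag omf_anti[of M 1 0] omf_anti[of M 2 0] omf_anti[of M 3 0]
     omf_anti[of M 2 1] omf_anti[of M 3 1] omf_anti[of M 3 2] neg_equal_iff_equal) auto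

lemma Sp4_gsp: "M \<in> Sp4 \<longleftrightarrow> gsp 1 M"
  by (simp add: Sp4_def gsp_def smat_def)

lemma smat1: "smat 1 A = A" by (simp add: smat_def vec_eq_iff)

lemma smat_right: "A ** smat c B = smat c (A ** B)"
  by (simp add: smat_def vec_eq_iff matrix_matrix_mult_def sum_distrib_left mult.left_commute)
lemma smat_left: "smat c B ** A = smat c (B ** A)"
  by (simp add: smat_def vec_eq_iff matrix_matrix_mult_def sum_distrib_left mult.assoc)

lemma gsp_mult_left: "gsp 1 g \<Longrightarrow> gsp l M \<Longrightarrow> gsp l (g ** M)"
proof -
  assume a: "gsp 1 g" "gsp l M"
  have "transpose (g ** M) ** J4 ** (g ** M) = transpose M ** (transpose g ** J4 ** g) ** M"
    by (simp add: matrix_transpose_mul matrix_mul_assoc)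
  also have "\<dots> = transpose M ** J4 ** M" using a(1) unfolding gsp_def smat1 by simp
  finally show ?thesis using a(2) unfolding gsp_def by simp
qed

lemma gsp_mult_right: "gsp l M \<Longrightarrow> gsp 1 h \<Longrightarrow> gsp l (M ** h)"
proof -
  assume a: "gsp l M" "gsp 1 h"
  have "transpose (M ** h) ** J4 ** (M ** h) = transpose h ** (transpose M ** J4 ** M) ** h"
    by (simp add: matrix_transpose_mul matrix_mul_assoc)
  also have "\<dots> = smat l (transpose h ** J4 ** h)"
    using a(1) by (simp add: gsp_def smat_right smat_left matrix_mul_assoc)
  also have "\<dots> = smat l J4" using a(2) unfolding gsp_def smat1 by simp
  finally show ?thesis unfolding gsp_def .
qed


definition mk4 :: "complex \<Rightarrow> complex \<Rightarrow> complex \<Rightarrow> complex \<Rightarrow> complex \<Rightarrow> complex \<Rightarrow> complex \<Rightarrow> complex \<Rightarrow> complex \<Rightarrow> complex \<Rightarrow> complex \<Rightarrow> complex \<Rightarrow> complex \<Rightarrow> complex \<Rightarrow> complex \<Rightarrow> complex \<Rightarrow> mat4" where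
  "mk4 a00 a01 a02 a03 a10 a11 a12 a13 a20 a21 a22 a23 a30 a31 a32 a33 = (\<chi> i j. if i = 0 then (if j = 0 then a00 else if j = 1 then a01 else if j = 2 then a02 else a03) else if i = 1 then (if j = 0 then a10 else if j = 1 then a11 else if j = 2 then a12 else a13) else if i = 2 then (if j = 0 then a20 else if j = 1 then a21 else if j = 2 then a22 else a23) else (if j = 0 then a30 else if j = 1 then a31 else if j = 2 then a32 else a33))"

lemma mk4_00 [simp]: "mk4 a00 a01 a02 a03 a10 a11 a12 a13 a20 a21 a22 a23 a30 a31 a32 a33 $ 0 $ 0 = a00" by (simp add: mk4_def)
lemma mk4_01 [simp]: "mk4 a00 a01 a02 a03 a10 a11 a12 a13 a20 a21 a22 a23 a30 a31 a32 a33 $ 0 $ 1 = a01" by (simp add: mk4_def)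
lemma mk4_02 [simp]: "mk4 a00 a01 a02 a03 a10 a11 a12 a13 a20 a21 a22 a23 a30 a31 a32 a33 $ 0 $ 2 = a02" by (simp add: mk4_def)
lemma mk4_03 [simp]: "mk4 a00 a01 a02 a03 a10 a11 a12 a13 a20 a21 a22 a23 a30 a31 a32 a33 $ 0 $ 3 = a03" by (simp add: mk4_def)
lemma mk4_10 [simp]: "mk4 a00 a01 a02 a03 a10 a11 a12 a13 a20 a21 a22 a23 a30 a31 a32 a33 $ 1 $ 0 = a10" by (simp add: mk4_def)
lemma mk4_11 [simp]: "mk4 a00 a01 a02 a03 a10 a11 a12 a13 a20 a21 a22 a23 a30 a31 a32 a33 $ 1 $ 1 = a11" by (simp add: mk4_def)
lemma mk4_12 [simp]: "mk4 a00 a01 a02 a03 a10 a11 a12 a13 a20 a21 a22 a23 a30 a31 a32 a33 $ 1 $ 2 = a12" by (simp add: mk4_def)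
lemma mk4_13 [simp]: "mk4 a00 a01 a02 a03 a10 a11 a12 a13 a20 a21 a22 a23 a30 a31 a32 a33 $ 1 $ 3 = a13" by (simp add: mk4_def)
lemma mk4_20 [simp]: "mk4 a00 a01 a02 a03 a10 a11 a12 a13 a20 a21 a22 a23 a30 a31 a32 a33 $ 2 $ 0 = a20" by (simp add: mk4_def)
lemma mk4_21 [simp]: "mk4 a00 a01 a02 a03 a10 a11 a12 a13 a20 a21 a22 a23 a30 a31 a32 a33 $ 2 $ 1 = a21" by (simp add: mk4_def)
lemma mk4_22 [simp]: "mk4 a00 a01 a02 a03 a10 a11 a12 a13 a20 a21 a22 a23 a30 a31 a32 a33 $ 2 $ 2 = a22" by (simp add: mk4_def)
lemma mk4_23 [simp]: "mk4 a00 a01 a02 a03 a10 a11 a12 a13 a20 a21 a22 a23 a30 a31 a32 a33 $ 2 $ 3 = a23" by (simp add: mk4_def)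
lemma mk4_30 [simp]: "mk4 a00 a01 a02 a03 a10 a11 a12 a13 a20 a21 a22 a23 a30 a31 a32 a33 $ 3 $ 0 = a30" by (simp add: mk4_def)
lemma mk4_31 [simp]: "mk4 a00 a01 a02 a03 a10 a11 a12 a13 a20 a21 a22 a23 a30 a31 a32 a33 $ 3 $ 1 = a31" by (simp add: mk4_def)
lemma mk4_32 [simp]: "mk4 a00 a01 a02 a03 a10 a11 a12 a13 a20 a21 a22 a23 a30 a31 a32 a33 $ 3 $ 2 = a32" by (simp add: mk4_def)
lemma mk4_33 [simp]: "mk4 a00 a01 a02 a03 a10 a11 a12 a13 a20 a21 a22 a23 a30 a31 a32 a33 $ 3 $ 3 = a33" by (simp add: mk4_def)


lemma mat1_nth: "(mat 1 :: mat4) $ i $ j = (if i = j then 1 else 0)"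
  by (simp add: mat_def)

lemma matrix_inv_eq: "A ** B = mat 1 \<Longrightarrow> B ** A = mat 1 \<Longrightarrow> matrix_inv A = B" for A B :: mat4
  unfolding matrix_inv_def
proof (rule some_equality)
  fix A' assume a: "A ** B = mat 1" "B ** A = mat 1" and b: "A ** A' = mat 1 \<and> A' ** A = mat 1"
  have "A' = A' ** (A ** B)" using a by (simp add: matrix_mul_rid)
  also have "\<dots> = (A' ** A) ** B" by (simp add: matrix_mul_assoc)
  also have "\<dots> = B" using b by (simp add: matrix_mul_lid)
  finally show "A' = B" .
qed simp

definition Uel :: "complex \<Rightarrow> complex \<Rightarrow> complex \<Rightarrow> complex \<Rightarrow> mat4" where
  "Uel t1 t2 t3 p = mk4 1 p t1 t3  0 1 0 0  0 (t3 - t1*t2) 1 t2  0 (-t1) 0 1"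

lemma Uel_nth [simp]:
  "Uel t1 t2 t3 p $ 0 $ 0 = 1" "Uel t1 t2 t3 p $ 0 $ 1 = p" "Uel t1 t2 t3 p $ 0 $ 2 = t1" "Uel t1 t2 t3 p $ 0 $ 3 = t3"
  "Uel t1 t2 t3 p $ 1 $ 0 = 0" "Uel t1 t2 t3 p $ 1 $ 1 = 1" "Uel t1 t2 t3 p $ 1 $ 2 = 0" "Uel t1 t2 t3 p $ 1 $ 3 = 0"
  "Uel t1 t2 t3 p $ 2 $ 0 = 0" "Uel t1 t2 t3 p $ 2 $ 1 = t3 - t1*t2" "Uel t1 t2 t3 p $ 2 $ 2 = 1" "Uel t1 t2 t3 p $ 2 $ 3 = t2"
  "Uel t1 t2 t3 p $ 3 $ 0 = 0" "Uel t1 t2 t3 p $ 3 $ 1 = -t1" "Uel t1 t2 t3 p $ 3 $ 2 = 0" "Uel t1 t2 t3 p $ 3 $ 3 = 1"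
  by (simp_all add: Uel_def)

lemma Uel_gsp: "gsp 1 (Uel t1 t2 t3 p)"
  unfolding gsp_iff omf_def by (simp add: algebra_simps)

lemma Uel_USp4: "Uel t1 t2 t3 p \<in> USp4"
  using Uel_gsp by (simp add: USp4_def Sp4_gsp)

lemma USp4_Uel: assumes "g \<in> USp4" shows "g = Uel (g$0$2) (g$2$3) (g$0$3) (g$0$1)"
proof -
  have z: "g$0$0 = 1" "g$1$0 = 0" "g$2$0 = 0" "g$3$0 = 0" "g$1$2 = 0" "g$2$2 = 1" "g$3$2 = 0"
     "g$1$3 = 0" "g$3$3 = 1" "g$1$1 = 1" using assms by (auto simp: USp4_def)
  have s: "gsp 1 g" using assms by (auto simp: USp4_def Sp4_gsp)
  then have "omf g 1 2 = 0" "omf g 1 3 = 0" by (auto simp: gsp_iff)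
  then have o: "- g$0$2 - g$3$1 = 0" "- g$0$3 + g$2$1 - g$3$1 * g$2$3 = 0"
    using z by (simp_all add: omf_def)
  have e1: "g$3$1 = - g$0$2" using o(1) by (simp add: algebra_simps)
  have e: "g$3$1 = - g$0$2" "g$2$1 = g$0$3 - g$0$2 * g$2$3"
    using o(2) e1 by (simp_all add: algebra_simps)
  show ?thesis unfolding vec_eq_iff all4 by (simp add: z e)
qed

lemma Uel_inv_mult: "Uel t1 t2 t3 p ** Uel (-t1) (-t2) (t1*t2 - t3) (-p) = mat 1"
  unfolding vec_eq_iff all4 by (simp add: mmul mat1_nth algebra_simps)
lemma Uel_inv_mult2: "Uel (-t1) (-t2) (t1*t2 - t3) (-p) ** Uel t1 t2 t3 p = mat 1"
  unfolding vec_eq_iff all4 by (simp add: mmul mat1_nth algebra_simps)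

lemma Uel_inv: "matrix_inv (Uel t1 t2 t3 p) = Uel (-t1) (-t2) (t1*t2 - t3) (-p)"
  by (rule matrix_inv_eq[OF Uel_inv_mult Uel_inv_mult2])

lemma Uel_is_inv: "\<exists>g\<in>USp4. matrix_inv g = Uel t1 t2 t3 p"
proof -
  have "matrix_inv (Uel (-t1) (-t2) (t1*t2 - t3) (-p)) = Uel t1 t2 t3 p"
    by (simp add: Uel_inv)
  then show ?thesis using Uel_USp4 by blast
qed

definition xf :: "mat4 \<Rightarrow> complex" where "xf M = M$1$0"
definition Df :: "mat4 \<Rightarrow> complex" where "Df M = M$1$0 * M$3$2 - M$1$2 * M$3$0"
definition qf :: "mat4 \<Rightarrow> complex" where "qf M = omf M 0 1"

lemma xf_inv: "xf (Uel a b c d ** M ** Uel a' b' c' d') = xf M"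
  by (simp add: xf_def mmul)

lemma Df_inv: "Df (Uel a b c d ** M ** Uel a' b' c' d') = Df M"
  by (simp add: Df_def mmul algebra_simps)

lemma omf_left: "gsp 1 g \<Longrightarrow> omf (g ** M) i j = omf M i j"
proof -
  assume a: "gsp 1 g"
  have "transpose (g ** M) ** J4 ** (g ** M) = transpose M ** (transpose g ** J4 ** g) ** M"
    by (simp add: matrix_transpose_mul matrix_mul_assoc)
  also have "\<dots> = transpose M ** J4 ** M" using a unfolding gsp_def smat1 by simp
  finally show ?thesis by (metis om_entry)
qed

lemma omf_right_Uel: "omf (N ** Uel a b c d) 0 1 = omf N 0 1 + (c - a*b) * omf N 0 2 - a * omf N 0 3"
  by (simp add: omf_def mmul algebra_simps)

lemma qf_inv: "omf M 0 2 = 0 \<Longrightarrow> omf M 0 3 = 0 \<Longrightarrow> qf (Uel a b c d ** M ** Uel a' b' c' d') = qf M"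
  unfolding qf_def
  by (simp add: omf_left[OF Uel_gsp] omf_right_Uel matrix_mul_assoc[symmetric])


lemma hpoly_polyfun: "hpoly d f \<Longrightarrow> polyfun f"
  by (induction rule: hpoly.induct) (auto intro: polyfun.intros)

lemma pf_cmult: "polyfun f \<Longrightarrow> polyfun (\<lambda>M. c * f M)"
  using pf_mult[OF pf_const] by blast

lemma pf_minus: "polyfun f \<Longrightarrow> polyfun g \<Longrightarrow> polyfun (\<lambda>M. f M - g M)"
proof -
  assume "polyfun f" "polyfun g"
  then have "polyfun (\<lambda>M. f M + (-1) * g M)" by (intro pf_add pf_cmult)
  then show ?thesis by simp
qed

lemma pf_sum: "finite S \<Longrightarrow> (\<And>i. i \<in> S \<Longrightarrow> polyfun (f i)) \<Longrightarrow> polyfun (\<lambda>M. \<Sum>i\<in>S. f i M)"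
proof (induction S rule: finite_induct)
  case empty then show ?case using pf_const[of 0] by simp
next
  case (insert x F) then show ?case by (simp add: pf_add)
qed

lemma pf_power: "polyfun f \<Longrightarrow> polyfun (\<lambda>M. f M ^ n)"
proof (induction n)
  case 0 then show ?case using pf_const[of 1] by simp
next
  case (Suc n) then show ?case using pf_mult[of f "\<lambda>M. f M ^ n"] by simp
qed

lemma hp_mult': "hpoly d f \<Longrightarrow> hpoly e g \<Longrightarrow> n = d + e \<Longrightarrow> hpoly n (\<lambda>M. f M * g M)"
  using hp_mult by blast

lemma hp_cmult: "hpoly d f \<Longrightarrow> hpoly d (\<lambda>M. c * f M)"
  using hp_mult'[OF hp_const] by simp

lemma hp_minus: "hpoly d f \<Longrightarrow> hpoly d g \<Longrightarrow> hpoly d (\<lambda>M. f M - g M)"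
proof -
  assume "hpoly d f" "hpoly d g"
  then have "hpoly d (\<lambda>M. f M + (-1) * g M)" by (intro hp_add hp_cmult)
  then show ?thesis by simp
qed

lemma hp_power: "hpoly d f \<Longrightarrow> hpoly (n * d) (\<lambda>M. f M ^ n)"
proof (induction n)
  case 0 then show ?case using hp_const[of 1] by simp
next
  case (Suc n) then show ?case using hp_mult'[of d f "n*d" "\<lambda>M. f M ^ n"] by simp
qed

lemma hp_exists: "\<exists>g. hpoly d g"
proof (induction d)
  case 0 then show ?case using hp_const by blast
next
  case (Suc d)
  then obtain g where "hpoly d g" by blast
  then have "hpoly (Suc d) (\<lambda>M. M$0$0 * g M)" using hp_mult'[OF hp_coord] by simp
  then show ?case by blast
qed

lemma hp_zero: "hpoly d (\<lambda>M. 0)"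
proof -
  obtain g where "hpoly d g" using hp_exists by blast
  then show ?thesis using hp_mult'[OF hp_const[of 0], of d g] by simp
qed

lemma hp_coord2: "hpoly 2 (\<lambda>M. M$i$j * M$k$l)"
  using hp_mult'[OF hp_coord hp_coord, of 2] by simp

lemma hp_xf: "hpoly 1 xf"
  unfolding xf_def by (rule hp_coord)

lemma hp_Df: "hpoly 2 Df"
  unfolding Df_def by (intro hp_minus hp_coord2)

lemma hp_qf: "hpoly 2 qf"
  unfolding qf_def omf_def by (intro hp_minus hp_add hp_coord2)

definition cS :: "mat4 set" where "cS = {smat c M | c M. M \<in> Sp4}"

lemma cone_def2: "coneSp4 = zariski_closure cS"
  unfolding coneSp4_def cS_def smat_def by simp

lemma cS_cone: "N \<in> cS \<Longrightarrow> N \<in> coneSp4"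
  unfolding cone_def2 zariski_closure_def by blast

lemma cone_vanish: "N \<in> coneSp4 \<Longrightarrow> polyfun p \<Longrightarrow> (\<And>M. M \<in> cS \<Longrightarrow> p M = 0) \<Longrightarrow> p N = 0"
  unfolding cone_def2 zariski_closure_def by blast

lemma omf_smat: "omf (smat k N) i j = k^2 * omf N i j"
  by (simp add: omf_def smat_def power2_eq_square algebra_simps)

lemma gsp_cS: assumes "gsp l N" "l \<noteq> 0" shows "N \<in> cS"
proof -
  define c where "c = csqrt l"
  have c2: "c^2 = l" unfolding c_def by simp
  then have c0: "c \<noteq> 0" using assms(2) by auto
  define M where "M = smat (1/c) N"
  have "\<forall>i j. omf M i j = 1 * J4$i$j"
  proof (intro allI)
    fix i j
    have "omf M i j = (1/c)^2 * (l * J4$i$j)" using assms(1) unfolding M_def omf_smat gsp_entry by simp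
    then have h: "c * (c * omf M i j) = l * J4$i$j" using c0 by (simp add: power2_eq_square field_simps)
    have "(c*c) * omf M i j = (c*c) * J4$i$j" using h c2 by (metis mult.assoc power2_eq_square)
    then show "omf M i j = 1 * J4$i$j" using c0 by simp
  qed
  then have "gsp 1 M" unfolding gsp_entry by blast
  moreover have "N = smat c M" using c0 by (simp add: M_def smat_def vec_eq_iff)
  ultimately show ?thesis unfolding cS_def Sp4_gsp by blast
qed

lemma gsp_cone: "gsp l N \<Longrightarrow> l \<noteq> 0 \<Longrightarrow> N \<in> coneSp4"
  using gsp_cS cS_cone by blast

lemma cS_omf: "N \<in> cS \<Longrightarrow> \<exists>l. gsp l N"
proof -
  assume "N \<in> cS"
  then obtain c M where N: "N = smat c M" and M: "gsp 1 M" unfolding cS_def Sp4_gsp by blast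
  then have "gsp (c^2) N" unfolding gsp_entry N omf_smat by simp
  then show ?thesis by blast
qed

lemma pf_omf: "polyfun (\<lambda>M. omf M i j)"
  unfolding omf_def by (intro pf_minus pf_add pf_mult pf_coord)

lemma cS_omf0: "M \<in> cS \<Longrightarrow> omf M 0 2 = 0 \<and> omf M 0 3 = 0"
proof -
  assume "M \<in> cS"
  then obtain l where "gsp l M" using cS_omf by blast
  then show ?thesis unfolding gsp_iff by simp
qed

lemma cone_omf02: assumes "N \<in> coneSp4" shows "omf N 0 2 = 0"
  using cone_vanish[OF assms pf_omf, of 0 2] cS_omf0 by blast
lemma cone_omf03: assumes "N \<in> coneSp4" shows "omf N 0 3 = 0"
  using cone_vanish[OF assms pf_omf, of 0 3] cS_omf0 by blast

lemma pf_mmul_entry: "polyfun (\<lambda>M. (A ** M ** B) $ i $ j)" for A B :: mat4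
  apply (simp only: mmul)
  by (intro pf_add pf_mult pf_const pf_coord)

lemma pf_subst: "polyfun p \<Longrightarrow> polyfun (\<lambda>M. p (A ** M ** B))" for A B :: mat4
proof (induction rule: polyfun.induct)
  case (pf_const c) show ?case by (rule polyfun.pf_const)
next
  case (pf_coord i j) show ?case by (rule pf_mmul_entry)
next
  case (pf_add f g) show ?case by (rule polyfun.pf_add[OF pf_add.IH])
next
  case (pf_mult f g) show ?case by (rule polyfun.pf_mult[OF pf_mult.IH])
qed

lemma cS_Uel: "N \<in> cS \<Longrightarrow> Uel a b c d ** N ** Uel a' b' c' d' \<in> cS"
proof -
  assume "N \<in> cS"
  then obtain k M where N: "N = smat k M" and M: "gsp 1 M" unfolding cS_def Sp4_gsp by blast
  have "Uel a b c d ** N ** Uel a' b' c' d' = smat k (Uel a b c d ** M ** Uel a' b' c' d')"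
    unfolding N smat_right smat_left ..
  moreover have "gsp 1 (Uel a b c d ** M ** Uel a' b' c' d')"
    by (intro gsp_mult_right gsp_mult_left Uel_gsp M)
  ultimately show ?thesis unfolding cS_def Sp4_gsp by blast
qed

lemma cone_Uel: "N \<in> coneSp4 \<Longrightarrow> Uel a b c d ** N ** Uel a' b' c' d' \<in> coneSp4"
  unfolding cone_def2 zariski_closure_def
proof (intro CollectI allI impI)
  fix p assume N: "N \<in> {x. \<forall>p. polyfun p \<longrightarrow> (\<forall>y\<in>cS. p y = 0) \<longrightarrow> p x = 0}"
    and p: "polyfun p" "\<forall>y\<in>cS. p y = 0"
  have "polyfun (\<lambda>M. p (Uel a b c d ** M ** Uel a' b' c' d'))" by (rule pf_subst[OF p(1)])
  moreover have "\<forall>y\<in>cS. p (Uel a b c d ** y ** Uel a' b' c' d') = 0" using p(2) cS_Uel by blast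
  ultimately show "p (Uel a b c d ** N ** Uel a' b' c' d') = 0" using N by blast
qed


lemma sum_fun_apply: "(\<Sum>i\<in>A. f i) x = (\<Sum>i\<in>A. f i x)"
  by (induction A rule: infinite_finite_induct) auto

interpretation FV: vector_space "\<lambda>(c::complex) (f::mat4 \<Rightarrow> complex) x. c * f x"
  by unfold_locales (simp_all add: fun_eq_iff algebra_simps)

lemma cdim_FV: "cdim V = FV.dim V"
  unfolding cdim_def ..

definition monm :: "nat \<Rightarrow> nat \<Rightarrow> nat \<Rightarrow> mat4 \<Rightarrow> complex" where
  "monm a b c M = xf M ^ a * Df M ^ b * qf M ^ c"

definition Bf :: "nat \<Rightarrow> nat \<Rightarrow> nat \<Rightarrow> mat4 \<Rightarrow> complex" where
  "Bf a b c = (\<lambda>M. if M \<in> coneSp4 then monm a b c M else 0)"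

lemma hp_mono: "hpoly (a + 2*b + 2*c) (monm a b c)"
proof -
  have "hpoly (a*1) (\<lambda>M. xf M ^ a)" by (rule hp_power[OF hp_xf])
  moreover have "hpoly (b*2) (\<lambda>M. Df M ^ b)" by (rule hp_power[OF hp_Df])
  moreover have "hpoly (c*2) (\<lambda>M. qf M ^ c)" by (rule hp_power[OF hp_qf])
  ultimately have "hpoly (a*1 + b*2 + c*2) (\<lambda>M. xf M ^ a * Df M ^ b * qf M ^ c)"
    by (intro hp_mult') auto
  then show ?thesis unfolding monm_def by (simp add: mult.commute)
qed

lemma pf_mono: "polyfun (monm a b c)"
  using hp_mono hpoly_polyfun by blast

lemma monm_inv: "M \<in> coneSp4 \<Longrightarrow> monm a b c (Uel t1 t2 t3 p ** M ** Uel s1 s2 s3 r) = monm a b c M"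
  unfolding monm_def
  by (simp add: xf_inv Df_inv qf_inv cone_omf02 cone_omf03)

lemma inv_degI:
  assumes "hpoly d f"
    and "\<And>t1 t2 t3 p s1 s2 s3 r M. M \<in> coneSp4 \<Longrightarrow> f (Uel t1 t2 t3 p ** M ** Uel s1 s2 s3 r) = f M"
  shows "(\<lambda>M. if M \<in> coneSp4 then f M else 0) \<in> inv_deg d"
proof -
  have "(\<lambda>M. if M \<in> coneSp4 then f M else 0) \<in> coord_ring_deg d"
    unfolding coord_ring_deg_def using assms(1) by blast
  moreover have "\<forall>g\<in>USp4. \<forall>h\<in>USp4. \<forall>M\<in>coneSp4.
      (\<lambda>M. if M \<in> coneSp4 then f M else 0) (matrix_inv g ** M ** h) = (\<lambda>M. if M \<in> coneSp4 then f M else 0) M"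
  proof (intro ballI)
    fix g h M assume g: "g \<in> USp4" and h: "h \<in> USp4" and M: "M \<in> coneSp4"
    have "matrix_inv g = Uel (- g$0$2) (- g$2$3) (g$0$2 * g$2$3 - g$0$3) (- g$0$1)"
      using USp4_Uel[OF g] Uel_inv by metis
    moreover obtain s1 s2 s3 r where "h = Uel s1 s2 s3 r" using USp4_Uel[OF h] by blast
    ultimately show "(\<lambda>M. if M \<in> coneSp4 then f M else 0) (matrix_inv g ** M ** h) = (\<lambda>M. if M \<in> coneSp4 then f M else 0) M"
      using M assms(2) cone_Uel by simp
  qed
  ultimately show ?thesis unfolding inv_deg_def by blast
qed

lemma Bf_inv_deg: "Bf a b c \<in> inv_deg (a + 2*b + 2*c)"
  unfolding Bf_def by (rule inv_degI[OF hp_mono monm_inv])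

definition nmat :: "complex \<Rightarrow> complex \<Rightarrow> complex \<Rightarrow> complex \<Rightarrow> mat4" where
  "nmat al be ga de = mk4 0 be 0 0  al 0 0 0  0 0 0 de  0 0 ga 0"

lemma nmat_nth [simp]:
  "nmat al be ga de $ 0 $ 0 = 0" "nmat al be ga de $ 0 $ 1 = be" "nmat al be ga de $ 0 $ 2 = 0" "nmat al be ga de $ 0 $ 3 = 0"
  "nmat al be ga de $ 1 $ 0 = al" "nmat al be ga de $ 1 $ 1 = 0" "nmat al be ga de $ 1 $ 2 = 0" "nmat al be ga de $ 1 $ 3 = 0"
  "nmat al be ga de $ 2 $ 0 = 0" "nmat al be ga de $ 2 $ 1 = 0" "nmat al be ga de $ 2 $ 2 = 0" "nmat al be ga de $ 2 $ 3 = de"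
  "nmat al be ga de $ 3 $ 0 = 0" "nmat al be ga de $ 3 $ 1 = 0" "nmat al be ga de $ 3 $ 2 = ga" "nmat al be ga de $ 3 $ 3 = 0"
  by (simp_all add: nmat_def)

lemma nmat_gsp: "ga * de = al * be \<Longrightarrow> gsp (- (al * be)) (nmat al be ga de)"
  unfolding gsp_iff omf_def by simp

lemma nmat_x: "xf (nmat al be ga de) = al" by (simp add: xf_def)
lemma nmat_D: "Df (nmat al be ga de) = al * ga" by (simp add: Df_def)
lemma nmat_q: "qf (nmat al be ga de) = - (al * be)" by (simp add: qf_def omf_def)

definition Pt :: "complex \<Rightarrow> complex \<Rightarrow> mat4" where
  "Pt D l = nmat 1 (-l) D (-l/D)"

lemma Pt_cone: "D \<noteq> 0 \<Longrightarrow> l \<noteq> 0 \<Longrightarrow> Pt D l \<in> coneSp4"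
  unfolding Pt_def using nmat_gsp[of D "-l/D" 1 "-l"] gsp_cone by simp

lemma monm_Pt: "monm a b c (Pt D l) = D^b * l^c"
  unfolding monm_def Pt_def nmat_x nmat_D nmat_q by simp

lemma Bf_Pt: "D \<noteq> 0 \<Longrightarrow> l \<noteq> 0 \<Longrightarrow> Bf a b c (Pt D l) = D^b * l^c"
  unfolding Bf_def using Pt_cone monm_Pt by simp

lemma uni_indep:
  fixes K :: "nat \<Rightarrow> complex"
  assumes "\<And>z. z \<noteq> 0 \<Longrightarrow> (\<Sum>i\<le>n. K i * z^i) = 0" and "i \<le> n"
  shows "K i = 0"
proof -
  define P where "P = (\<Sum>i\<le>n. monom (K i) i)"
  have ev: "poly P z = (\<Sum>i\<le>n. K i * z^i)" for z
    unfolding P_def poly_sum by (simp add: poly_monom)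
  have "poly (P * [:0,1:]) z = 0" for z
    using assms(1)[of z] by (cases "z = 0") (simp_all add: ev)
  then have "P * [:0,1:] = 0" using poly_all_0_iff_0 by blast
  then have "P = 0" by simp
  then have "coeff P i = 0" by simp
  moreover have "coeff P i = K i" unfolding P_def by (rule coeff_sum_monom[OF assms(2)])
  ultimately show ?thesis by simp
qed

lemma bi_indep:
  fixes k :: "nat \<Rightarrow> nat \<Rightarrow> complex"
  assumes "\<And>D l. D \<noteq> 0 \<Longrightarrow> l \<noteq> 0 \<Longrightarrow> (\<Sum>b\<le>n. \<Sum>c\<le>n. k b c * D^b * l^c) = 0"
    and "b \<le> n" "c \<le> n"
  shows "k b c = 0"
proof -
  have "(\<Sum>c\<le>n. k b' c * l^c) = 0" if "l \<noteq> 0" "b' \<le> n" for l b'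
  proof (rule uni_indep[where K = "\<lambda>b. \<Sum>c\<le>n. k b c * l^c", OF _ that(2)])
    fix z :: complex assume "z \<noteq> 0"
    then have "(\<Sum>b\<le>n. \<Sum>c\<le>n. k b c * z^b * l^c) = 0" using assms(1) that(1) by blast
    moreover have "(\<Sum>i\<le>n. (\<Sum>c\<le>n. k i c * l^c) * z^i) = (\<Sum>b\<le>n. \<Sum>c\<le>n. k b c * z^b * l^c)"
      by (intro sum.cong refl) (simp add: sum_distrib_left sum_distrib_right mult_ac)
    ultimately show "(\<Sum>i\<le>n. (\<Sum>c\<le>n. k i c * l^c) * z^i) = 0" by simp
  qed
  then show ?thesis using uni_indep[where K = "k b", OF _ assms(3)] assms(2) by blast
qed


definition idx :: "nat \<Rightarrow> (nat \<times> nat) set" where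
  "idx d = {(b,c). 2*b + 2*c \<le> d}"

definition Bv :: "nat \<Rightarrow> nat \<times> nat \<Rightarrow> mat4 \<Rightarrow> complex" where
  "Bv d bc = Bf (d - 2 * fst bc - 2 * snd bc) (fst bc) (snd bc)"

definition Bd :: "nat \<Rightarrow> (mat4 \<Rightarrow> complex) set" where
  "Bd d = Bv d ` idx d"

lemma idx_sub: "idx d \<subseteq> {..d} \<times> {..d}"
  unfolding idx_def by auto

lemma finite_idx: "finite (idx d)"
  using finite_subset[OF idx_sub] by blast

lemma Bd_sub: "Bd d \<subseteq> inv_deg d"
proof
  fix v assume "v \<in> Bd d"
  then obtain b c where bc: "(b,c) \<in> idx d" and v: "v = Bv d (b,c)" unfolding Bd_def by auto
  have "d - 2*b - 2*c + 2*b + 2*c = d" using bc unfolding idx_def by auto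
  then show "v \<in> inv_deg d" unfolding v Bv_def using Bf_inv_deg[of "d - 2*b - 2*c" b c] by simp
qed

lemma Bv_Pt: "D \<noteq> 0 \<Longrightarrow> l \<noteq> 0 \<Longrightarrow> Bv d (b,c) (Pt D l) = D^b * l^c"
  unfolding Bv_def using Bf_Pt by simp

lemma pow2_inj: "(2::complex)^a = 2^b \<Longrightarrow> a = b"
proof -
  assume "(2::complex)^a = 2^b"
  then have "of_nat (2^a) = (of_nat (2^b) :: complex)" by simp
  then have "(2::nat)^a = 2^b" using of_nat_eq_iff by blast
  then show "a = b" by simp
qed

lemma Bv_inj: "inj_on (Bv d) (idx d)"
proof (rule inj_onI)
  fix p q assume "p \<in> idx d" "q \<in> idx d" "Bv d p = Bv d q"
  obtain b c where p: "p = (b,c)" by (cases p)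
  obtain b' c' where q: "q = (b',c')" by (cases q)
  have "Bv d (b,c) (Pt 2 1) = Bv d (b',c') (Pt 2 1)" "Bv d (b,c) (Pt 1 2) = Bv d (b',c') (Pt 1 2)"
    using \<open>Bv d p = Bv d q\<close> p q by simp_all
  then have "(2::complex)^b = 2^b'" "(2::complex)^c = 2^c'" by (simp_all add: Bv_Pt)
  then show "p = q" using p q pow2_inj by blast
qed

lemma card_Bd: "card (Bd d) = card (idx d)"
  unfolding Bd_def using card_image[OF Bv_inj] .

lemma sum_idx_double:
  "(\<Sum>p\<in>idx d. g p) = (\<Sum>b\<le>d. \<Sum>c\<le>d. if (b,c) \<in> idx d then g (b,c) else 0)"
proof -
  have "(\<Sum>b\<le>d. \<Sum>c\<le>d. if (b,c) \<in> idx d then g (b,c) else 0)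
      = (\<Sum>p\<in>{..d}\<times>{..d}. (\<lambda>(b,c). if (b,c) \<in> idx d then g (b,c) else 0) p)"
    by (simp add: sum.cartesian_product)
  also have "\<dots> = (\<Sum>p\<in>{..d}\<times>{..d}. if p \<in> idx d then g p else 0)"
    by (intro sum.cong refl) auto
  also have "\<dots> = (\<Sum>p\<in>({..d}\<times>{..d}) \<inter> idx d. g p)"
    by (simp add: sum.inter_restrict)
  also have "({..d}\<times>{..d}) \<inter> idx d = idx d" using idx_sub by blast
  finally show ?thesis by simp
qed

lemma Bd_indep: "FV.independent (Bd d)"
proof (rule FV.independent_if_scalars_zero)
  show "finite (Bd d)" unfolding Bd_def using finite_idx by blast
next
  fix f :: "(mat4 \<Rightarrow> complex) \<Rightarrow> complex" and v
  assume s: "(\<Sum>x\<in>Bd d. (\<lambda>M. f x * x M)) = 0" and v: "v \<in> Bd d"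
  have ev: "(\<Sum>p\<in>idx d. f (Bv d p) * (D ^ fst p * l ^ snd p)) = 0" if "D \<noteq> 0" "l \<noteq> 0" for D l
  proof -
    have "(\<Sum>x\<in>Bd d. (\<lambda>M. f x * x M)) (Pt D l) = 0" using s by simp
    then have "(\<Sum>x\<in>Bd d. f x * x (Pt D l)) = 0" by (simp add: sum_fun_apply)
    then have "(\<Sum>p\<in>idx d. f (Bv d p) * Bv d p (Pt D l)) = 0"
      unfolding Bd_def by (simp add: sum.reindex[OF Bv_inj])
    moreover have "Bv d p (Pt D l) = D ^ fst p * l ^ snd p" for p
      using Bv_Pt[OF that, of d "fst p" "snd p"] by simp
    ultimately show ?thesis by simp
  qed
  define k where "k b c = (if (b,c) \<in> idx d then f (Bv d (b,c)) else 0)" for b c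
  have kz: "k b c = 0" if "b \<le> d" "c \<le> d" for b c
  proof (rule bi_indep[OF _ that])
    fix D l :: complex assume "D \<noteq> 0" "l \<noteq> 0"
    then have "(\<Sum>p\<in>idx d. f (Bv d p) * (D ^ fst p * l ^ snd p)) = 0" by (rule ev)
    moreover have "(\<Sum>b\<le>d. \<Sum>c\<le>d. k b c * D^b * l^c) = (\<Sum>b\<le>d. \<Sum>c\<le>d. if (b,c)\<in>idx d then f (Bv d (b,c)) * (D ^ fst (b,c) * l ^ snd (b,c)) else 0)"
      by (intro sum.cong refl) (simp add: k_def mult.assoc)
    ultimately show "(\<Sum>b\<le>d. \<Sum>c\<le>d. k b c * D^b * l^c) = 0"
      unfolding sum_idx_double by simp
  qed
  obtain b c where bc: "(b,c) \<in> idx d" "v = Bv d (b,c)" using v unfolding Bd_def by auto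
  then have "b \<le> d" "c \<le> d" using idx_sub by auto
  then have "k b c = 0" by (rule kz)
  then show "f v = 0" using bc unfolding k_def by simp
qed

definition tri :: "nat \<Rightarrow> nat" where "tri m = (\<Sum>s\<le>m. s + 1)"

lemma idx_eq: "idx d = (SIGMA b:{..d div 2}. {..d div 2 - b})"
  unfolding idx_def by auto

lemma sum_rev_aux: "(\<Sum>b\<le>m. Suc (m - b)) = tri m"
proof (induction m)
  case 0 then show ?case by (simp add: tri_def)
next
  case (Suc m)
  have "(\<Sum>b\<le>Suc m. Suc (Suc m - b)) = (\<Sum>b\<le>m. Suc (Suc m - b)) + 1" by simp
  also have "(\<Sum>b\<le>m. Suc (Suc m - b)) = (\<Sum>b\<le>m. Suc (m - b) + 1)"
    by (intro sum.cong refl) (simp add: Suc_diff_le)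
  also have "\<dots> = (\<Sum>b\<le>m. Suc (m - b)) + (\<Sum>b\<le>m. 1)" by (rule sum.distrib)
  also have "\<dots> = tri m + (m + 1)" using Suc by simp
  finally show ?case by (simp add: tri_def)
qed

lemma card_idx: "card (idx d) = tri (d div 2)"
  unfolding idx_eq by (simp add: card_SigmaI sum_rev_aux)


lemma Uel0: "Uel 0 0 0 0 = mat 1"
  unfolding vec_eq_iff all4 by (simp add: mat1_nth)

lemma stageA:
  assumes x: "N$1$0 \<noteq> 0"
  defines "M \<equiv> Uel (N$3$0 / N$1$0) 0 (- N$2$0 / N$1$0) (- N$0$0 / N$1$0) ** N ** Uel 0 0 0 0"
  shows "M$0$0 = 0" "M$2$0 = 0" "M$3$0 = 0" "M$1$0 = N$1$0"
  using x unfolding M_def by (simp_all add: mmul field_simps)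

lemma stageB:
  assumes g: "gsp l M" and c0: "M$0$0 = 0" "M$2$0 = 0" "M$3$0 = 0" "M$1$0 = x" and x: "x \<noteq> 0"
    and y: "M$3$2 \<noteq> 0"
  defines "M' \<equiv> Uel 0 (- M$2$2 / M$3$2) 0 0 ** M ** Uel (- M$1$2 / x) 0 0 0"
  shows "M'$0$0 = 0" "M'$2$0 = 0" "M'$3$0 = 0" "M'$1$0 = x"
    "M'$0$2 = 0" "M'$1$2 = 0" "M'$2$2 = 0" "M'$3$2 = M$3$2"
proof -
  have "omf M 0 2 = 0" using g by (simp add: gsp_iff)
  then have m02: "M$0$2 = 0" using c0 x by (simp add: omf_def)
  show "M'$0$0 = 0" "M'$2$0 = 0" "M'$3$0 = 0" "M'$1$0 = x"
    "M'$0$2 = 0" "M'$1$2 = 0" "M'$2$2 = 0" "M'$3$2 = M$3$2"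
    using c0 x y m02 unfolding M'_def by (simp_all add: mmul field_simps)
qed

lemma stageD:
  assumes g: "gsp l M" and c0: "M$0$0 = 0" "M$2$0 = 0" "M$3$0 = 0" "M$1$0 = x" and x: "x \<noteq> 0"
    and c2: "M$0$2 = 0" "M$1$2 = 0" "M$2$2 = 0" "M$3$2 = y" and y: "y \<noteq> 0" and l: "l \<noteq> 0"
  shows "Uel 0 0 0 0 ** M ** Uel 0 (- M$3$3 / y) (- M$1$3 / x) (- M$1$1 / x) = nmat x (- l / x) y (- l / y)"
proof -
  have o: "omf M 0 1 = l" "omf M 2 3 = l" "omf M 0 3 = 0" "omf M 1 2 = 0" "omf M 1 3 = 0"
    using g by (simp_all add: gsp_iff)
  have m03: "M$0$3 = 0" using o(3) c0 x by (simp add: omf_def)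
  have "- (y * M$2$3) = l" using o(2) c2 m03 by (simp add: omf_def)
  then have m23: "M$2$3 = - l / y" using y by (simp add: field_simps minus_equation_iff)
  have "- (x * M$0$1) = l" using o(1) c0 by (simp add: omf_def)
  then have m01: "M$0$1 = - l / x" using x by (simp add: field_simps minus_equation_iff)
  have m21: "M$2$1 = 0" using o(4) c0 c2 y by (simp add: omf_def)
  have "M$0$1 * M$1$3 - M$3$1 * M$2$3 = 0" using o(5) m03 m21 by (simp add: omf_def)
  then have "l * (x * M$3$1 - y * M$1$3) = 0" using m01 m23 x y by (simp add: field_simps)
  then have m31: "M$3$1 = M$1$3 * y / x" using l x by (simp add: field_simps)
  show ?thesis
    unfolding vec_eq_iff all4 using c0 c2 x y m03 m23 m01 m21 m31
    by (simp add: mmul field_simps)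
qed

lemma gsp_UNU: "gsp l M \<Longrightarrow> gsp l (Uel a b c d ** M ** Uel a' b' c' d')"
  by (intro gsp_mult_right gsp_mult_left Uel_gsp)

lemma bruhat:
  assumes inv: "\<And>M t1 t2 t3 p s1 s2 s3 r. M \<in> coneSp4 \<Longrightarrow> \<Phi> (Uel t1 t2 t3 p ** M ** Uel s1 s2 s3 r) = \<Phi> M"
    and g: "gsp l N" and l: "l \<noteq> 0" and x: "xf N \<noteq> 0" and D: "Df N \<noteq> 0"
  shows "\<Phi> N = \<Phi> (nmat (xf N) (- l / xf N) (Df N / xf N) (- l / (Df N / xf N)))"
proof -
  define x where "x = xf N"
  have x0: "N$1$0 \<noteq> 0" using x by (simp add: xf_def)
  define M1 where "M1 = Uel (N$3$0 / N$1$0) 0 (- N$2$0 / N$1$0) (- N$0$0 / N$1$0) ** N ** Uel 0 0 0 0"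
  have M1c: "M1$0$0 = 0" "M1$2$0 = 0" "M1$3$0 = 0" "M1$1$0 = x"
    using stageA[OF x0] unfolding M1_def x_def xf_def by simp_all
  have g1: "gsp l M1" unfolding M1_def by (rule gsp_UNU[OF g])
  have p1: "\<Phi> M1 = \<Phi> N" unfolding M1_def by (rule inv[OF gsp_cone[OF g l]])
  have D1: "Df M1 = Df N" unfolding M1_def by (rule Df_inv)
  have y: "M1$3$2 = Df N / x" using D1 M1c x unfolding x_def by (simp add: Df_def field_simps)
  have y0: "M1$3$2 \<noteq> 0" using y D x unfolding x_def by simp
  have x1: "x \<noteq> 0" using x unfolding x_def .
  define M2 where "M2 = Uel 0 (- M1$2$2 / M1$3$2) 0 0 ** M1 ** Uel (- M1$1$2 / x) 0 0 0"
  note M2c = stageB[OF g1 M1c x1 y0, folded M2_def]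
  have g2: "gsp l M2" unfolding M2_def by (rule gsp_UNU[OF g1])
  have p2: "\<Phi> M2 = \<Phi> M1" unfolding M2_def by (rule inv[OF gsp_cone[OF g1 l]])
  have y2: "M2$3$2 = Df N / x" using M2c(8) y by simp
  have y20: "Df N / x \<noteq> 0" using y y0 by simp
  have e: "Uel 0 0 0 0 ** M2 ** Uel 0 (- M2$3$3 / (Df N / x)) (- M2$1$3 / x) (- M2$1$1 / x)
      = nmat x (- l / x) (Df N / x) (- l / (Df N / x))"
    by (rule stageD[OF g2 M2c(1-4) x1 M2c(5-7) y2 y20 l])
  have p3: "\<Phi> (Uel 0 0 0 0 ** M2 ** Uel 0 (- M2$3$3 / (Df N / x)) (- M2$1$3 / x) (- M2$1$1 / x)) = \<Phi> M2"
    by (rule inv[OF gsp_cone[OF g2 l]])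
  show ?thesis using p1 p2 p3 e unfolding x_def by simp
qed


definition Tv :: "complex \<Rightarrow> complex \<Rightarrow> complex \<Rightarrow> complex \<Rightarrow> complex \<Rightarrow> mat4" where
  "Tv u0 u1 u2 u3 s = mk4 (1 + s * u0 * (- u1)) (s * u0 * u0) (s * u0 * (- u3)) (s * u0 * u2) (s * u1 * (- u1)) (1 + s * u1 * u0) (s * u1 * (- u3)) (s * u1 * u2) (s * u2 * (- u1)) (s * u2 * u0) (1 + s * u2 * (- u3)) (s * u2 * u2) (s * u3 * (- u1)) (s * u3 * u0) (s * u3 * (- u3)) (1 + s * u3 * u2)"

definition TB :: "complex \<Rightarrow> complex \<Rightarrow> complex \<Rightarrow> complex \<Rightarrow> mat4 \<Rightarrow> mat4" where
  "TB u0 u1 u2 u3 N = mk4 (u0 * ((- u1) * N$0 $ 0 + u0 * N$1 $ 0 + (- u3) * N$2 $ 0 + u2 * N$3 $ 0)) (u0 * ((- u1) * N$0 $ 1 + u0 * N$1 $ 1 + (- u3) * N$2 $ 1 + u2 * N$3 $ 1)) (u0 * ((- u1) * N$0 $ 2 + u0 * N$1 $ 2 + (- u3) * N$2 $ 2 + u2 * N$3 $ 2)) (u0 * ((- u1) * N$0 $ 3 + u0 * N$1 $ 3 + (- u3) * N$2 $ 3 + u2 * N$3 $ 3)) (u1 * ((- u1) * N$0 $ 0 + u0 * N$1 $ 0 + (- u3) * N$2 $ 0 + u2 * N$3 $ 0)) (u1 * ((- u1) * N$0 $ 1 + u0 * N$1 $ 1 + (- u3) * N$2 $ 1 + u2 *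 N$3 $ 1)) (u1 * ((- u1) * N$0 $ 2 + u0 * N$1 $ 2 + (- u3) * N$2 $ 2 + u2 * N$3 $ 2)) (u1 * ((- u1) * N$0 $ 3 + u0 * N$1 $ 3 + (- u3) * N$2 $ 3 + u2 * N$3 $ 3)) (u2 * ((- u1) * N$0 $ 0 + u0 * N$1 $ 0 + (- u3) * N$2 $ 0 + u2 * N$3 $ 0)) (u2 * ((- u1) * N$0 $ 1 + u0 * N$1 $ 1 + (- u3) * N$2 $ 1 + u2 * N$3 $ 1)) (u2 * ((- u1) * N$0 $ 2 + u0 * N$1 $ 2 + (- u3) * N$2 $ 2 + u2 * N$3 $ 2)) (u2 * ((- u1) * N$0 $ 3 + u0 * N$1 $ 3 + (- u3) * N$2 $ 3 + u2 * N$3 $ 3)) (u3 * ((- u1) * N$0 $ 0 + u0 * N$1 $ 0 + (- u3) * N$2 $ 0 + u2 * N$3 $ 0)) (u3 * ((- u1) * N$0 $ 1 + u0 * N$1 $ 1 + (- u3) * N$2 $ 1 + u2 * N$3 $ 1)) (u3 * ((- u1) * N$0 $ 2 + u0 * N$1 $ 2 + (- u3) * N$2 $ 2 + u2 * N$3 $ 2)) (u3 * ((- u1) * N$0 $ 3 + u0 * N$1 $ 3 + (- u3) * N$2 $ 3 + u2 * N$3 $ 3))"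

definition lin :: "mat4 \<Rightarrow> mat4 \<Rightarrow> complex \<Rightarrow> mat4" where
  "lin A B s = (\<chi> i j. A$i$j + s * B$i$j)"

lemma lin_nth [simp]: "lin A B s $ i $ j = A$i$j + s * B$i$j"
  by (simp add: lin_def)

lemma lin0: "lin A B 0 = A"
  by (simp add: vec_eq_iff)

lemma Tv_gsp: "gsp 1 (Tv u0 u1 u2 u3 s)"
  unfolding gsp_iff omf_def Tv_def by (simp add: algebra_simps)

lemma Tv_lin: "Tv u0 u1 u2 u3 s ** N = lin N (TB u0 u1 u2 u3 N) s"
  unfolding vec_eq_iff all4 by (simp add: mmul Tv_def TB_def algebra_simps)

lemma pf_curve: "polyfun p \<Longrightarrow> \<exists>P. \<forall>s. p (lin A B s) = poly P s"
proof (induction rule: polyfun.induct)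
  case (pf_const c)
  have "\<forall>s. c = poly [:c:] s" by simp
  then show ?case by blast
next
  case (pf_coord i j)
  have "\<forall>s. lin A B s $ i $ j = poly [:A$i$j, B$i$j:] s" by simp
  then show ?case by blast
next
  case (pf_add f g)
  then obtain P Q where "\<forall>s. f (lin A B s) = poly P s" "\<forall>s. g (lin A B s) = poly Q s" by blast
  then have "\<forall>s. f (lin A B s) + g (lin A B s) = poly (P + Q) s" by simp
  then show ?case by blast
next
  case (pf_mult f g)
  then obtain P Q where "\<forall>s. f (lin A B s) = poly P s" "\<forall>s. g (lin A B s) = poly Q s" by blast
  then have "\<forall>s. f (lin A B s) * g (lin A B s) = poly (P * Q) s" by simp
  then show ?case by blast
qed

lemma poly_vanish:
  fixes P Q :: "complex poly"
  assumes "\<And>s. poly Q s \<noteq> 0 \<Longrightarrow> poly P s = 0" and "poly Q s0 \<noteq> 0"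
  shows "P = 0"
proof -
  have "poly (P * Q) s = 0" for s using assms(1)[of s] by (cases "poly Q s = 0") auto
  then have "P * Q = 0" using poly_all_0_iff_0 by blast
  moreover have "Q \<noteq> 0" using assms(2) by auto
  ultimately show ?thesis by simp
qed

lemma pf_xD: "polyfun (\<lambda>M. xf M * Df M)"
  using hpoly_polyfun[OF hp_mult'[OF hp_xf hp_Df refl]] .

lemma curve_arg:
  assumes p: "polyfun p"
    and van: "\<And>s. xf (lin N B s) * Df (lin N B s) \<noteq> 0 \<Longrightarrow> p (lin N B s) = 0"
    and s0: "xf (lin N B s0) * Df (lin N B s0) \<noteq> 0"
  shows "p N = 0"
proof -
  obtain P where P: "\<forall>s. p (lin N B s) = poly P s" using pf_curve[OF p] by blast
  obtain Q where Q: "\<forall>s. xf (lin N B s) * Df (lin N B s) = poly Q s" using pf_curve[OF pf_xD] by blast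
  have "P = 0"
    by (rule poly_vanish[of Q P s0]) (use P Q van s0 in auto)
  have "p N = p (lin N B 0)" by (simp add: lin0)
  also have "\<dots> = poly P 0" using P by blast
  finally show ?thesis using \<open>P = 0\<close> by simp
qed

lemma curve_arg2:
  assumes p: "polyfun p"
    and van: "\<And>s. s \<noteq> 0 \<Longrightarrow> p (lin N B s) = 0"
  shows "p N = 0"
proof -
  obtain P where P: "\<forall>s. p (lin N B s) = poly P s" using pf_curve[OF p] by blast
  have "P = 0"
    by (rule poly_vanish[of "[:0,1:]" P 1]) (use P van in auto)
  have "p N = p (lin N B 0)" by (simp add: lin0)
  also have "\<dots> = poly P 0" using P by blast
  finally show ?thesis using \<open>P = 0\<close> by simp
qed


definition GV :: "(mat4 \<Rightarrow> complex) \<Rightarrow> bool" where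
  "GV p \<longleftrightarrow> (\<forall>N l. gsp l N \<longrightarrow> l \<noteq> 0 \<longrightarrow> xf N \<noteq> 0 \<longrightarrow> Df N \<noteq> 0 \<longrightarrow> p N = 0)"

lemma curve_gsp: "gsp l N \<Longrightarrow> gsp l (lin N (TB u0 u1 u2 u3 N) s)"
  using gsp_mult_left[OF Tv_gsp] Tv_lin by metis

lemma dens_step:
  assumes p: "polyfun p" and G: "GV p" and g: "gsp l N" and l: "l \<noteq> 0"
    and ex: "\<And>s. xf (lin N (TB u0 u1 u2 u3 N) s) = a + s * k"
    and eD: "\<And>s. Df (lin N (TB u0 u1 u2 u3 N) s) = s * m"
    and a: "a \<noteq> 0" and m: "m \<noteq> 0"
  shows "p N = 0"
proof (rule curve_arg[OF p])
  fix s assume "xf (lin N (TB u0 u1 u2 u3 N) s) * Df (lin N (TB u0 u1 u2 u3 N) s) \<noteq> 0"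
  then show "p (lin N (TB u0 u1 u2 u3 N) s) = 0"
    using G curve_gsp[OF g, of u0 u1 u2 u3 s] l unfolding GV_def by auto
next
  define s0 :: complex where "s0 = (if a + k \<noteq> 0 then 1 else 2)"
  have "a + s0 * k \<noteq> 0"
  proof (cases "a + k = 0")
    case True then have "k = - a" by (simp add: add_eq_0_iff)
    then show ?thesis using True a by (simp add: s0_def)
  qed (simp add: s0_def)
  moreover have "s0 \<noteq> 0" by (simp add: s0_def)
  ultimately show "xf (lin N (TB u0 u1 u2 u3 N) s0) * Df (lin N (TB u0 u1 u2 u3 N) s0) \<noteq> 0"
    using m by (simp add: ex eD)
qed

lemma alg_cases:
  fixes a0 a1 a2 a3 b0 b1 b2 b3 c0 c1 c2 c3 l :: complex
  assumes a1: "a1 \<noteq> 0" and D: "a1 * b3 - b1 * a3 = 0"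
    and o23: "b0 * c1 - b1 * c0 + b2 * c3 - b3 * c2 = l" and l: "l \<noteq> 0"
    and o03: "a0 * c1 - a1 * c0 + a2 * c3 - a3 * c2 = 0"
  shows "a2 * b1 - a1 * b2 \<noteq> 0 \<or> a3 * b0 - a0 * b3 \<noteq> 0 \<or>
      - ((b0 + b2) * (a1 - a3)) - (a0 + a2) * (b3 - b1) \<noteq> 0"
proof (rule ccontr)
  assume "\<not> ?thesis"
  then have h1: "a2 * b1 - a1 * b2 = 0" and h2: "a3 * b0 - a0 * b3 = 0"
    and h3: "- ((b0 + b2) * (a1 - a3)) - (a0 + a2) * (b3 - b1) = 0" by auto
  have k2: "a1 * b2 - a2 * b1 = 0" using h1 by (simp add: algebra_simps)
  have k3: "a1 * b3 - a3 * b1 = 0" using D by (simp add: algebra_simps)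
  have k0: "a1 * b0 - a0 * b1 = 0"
  proof (cases "a3 = 0")
    case True
    then have "b3 = 0" using D a1 by simp
    then have "- (a1 * b0 - a0 * b1) - (a1 * b2 - a2 * b1) = 0" using h3 True by (simp add: algebra_simps)
    then show ?thesis using k2 by simp
  next
    case False
    have "a3 * (a1 * b0 - a0 * b1) = a1 * (a3 * b0 - a0 * b3) + a0 * (a1 * b3 - a3 * b1)"
      by (simp add: algebra_simps)
    then have "a3 * (a1 * b0 - a0 * b1) = 0" using h2 k3 by simp
    then show ?thesis using False by simp
  qed
  have "a1 * l - b1 * 0 = c1 * (a1 * b0 - a0 * b1) + c3 * (a1 * b2 - a2 * b1) - c2 * (a1 * b3 - a3 * b1)"
    unfolding o23[symmetric] o03[symmetric] by (simp add: algebra_simps)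
  then have "a1 * l = 0" using k0 k2 k3 by simp
  then show False using a1 l by simp
qed

lemma dens1:
  assumes p: "polyfun p" and G: "GV p" and g: "gsp l N" and l: "l \<noteq> 0" and x: "xf N \<noteq> 0"
  shows "p N = 0"
proof (cases "Df N = 0")
  case False then show ?thesis using G g l x unfolding GV_def by blast
next
  case True
  have o: "omf N 2 3 = l" "omf N 0 3 = 0" using g by (simp_all add: gsp_iff)
  have a1: "N$1$0 \<noteq> 0" using x by (simp add: xf_def)
  have D: "N$1$0 * N$3$2 - N$1$2 * N$3$0 = 0" using True by (simp add: Df_def)
  have cases: "N$2$0 * N$1$2 - N$1$0 * N$2$2 \<noteq> 0 \<or> N$3$0 * N$0$2 - N$0$0 * N$3$2 \<noteq> 0 \<or>
      - ((N$0$2 + N$2$2) * (N$1$0 - N$3$0)) - (N$0$0 + N$2$0) * (N$3$2 - N$1$2) \<noteq> 0"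
    by (rule alg_cases[OF a1 D _ l]) (use o in \<open>simp_all add: omf_def\<close>)
  show ?thesis
  proof -
    { assume m: "N$2$0 * N$1$2 - N$1$0 * N$2$2 \<noteq> 0"
      have "p N = 0"
      proof (rule dens_step[OF p G g l _ _ a1 m, of 0 0 0 1 0])
        fix s show "xf (lin N (TB 0 0 0 1 N) s) = N$1$0 + s * 0" by (simp add: xf_def TB_def)
        show "Df (lin N (TB 0 0 0 1 N) s) = s * (N$2$0 * N$1$2 - N$1$0 * N$2$2)"
          using D by (simp add: Df_def TB_def algebra_simps)
      qed }
    moreover
    { assume m: "N$3$0 * N$0$2 - N$0$0 * N$3$2 \<noteq> 0"
      have "p N = 0"
      proof (rule dens_step[OF p G g l _ _ a1 m, of 0 1 0 0 "- N$0$0"])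
        fix s show "xf (lin N (TB 0 1 0 0 N) s) = N$1$0 + s * (- N$0$0)" by (simp add: xf_def TB_def)
        show "Df (lin N (TB 0 1 0 0 N) s) = s * (N$3$0 * N$0$2 - N$0$0 * N$3$2)"
          using D by (simp add: Df_def TB_def algebra_simps)
      qed }
    moreover
    { assume m: "- ((N$0$2 + N$2$2) * (N$1$0 - N$3$0)) - (N$0$0 + N$2$0) * (N$3$2 - N$1$2) \<noteq> 0"
      have "p N = 0"
      proof (rule dens_step[OF p G g l _ _ a1 m, of 0 1 0 1 "- (N$0$0 + N$2$0)"])
        fix s show "xf (lin N (TB 0 1 0 1 N) s) = N$1$0 + s * (- (N$0$0 + N$2$0))" by (simp add: xf_def TB_def algebra_simps)
        show "Df (lin N (TB 0 1 0 1 N) s) = s * (- ((N$0$2 + N$2$2) * (N$1$0 - N$3$0)) - (N$0$0 + N$2$0) * (N$3$2 - N$1$2))"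
          using D by (simp add: Df_def TB_def algebra_simps)
      qed }
    ultimately show ?thesis using cases by blast
  qed
qed

lemma dens2:
  assumes p: "polyfun p" and G: "GV p" and g: "gsp l N" and l: "l \<noteq> 0"
  shows "p N = 0"
proof (cases "xf N = 0")
  case False then show ?thesis using dens1[OF p G g l] by blast
next
  case True
  have a1: "N$1$0 = 0" using True by (simp add: xf_def)
  have "omf N 0 1 = l" using g by (simp add: gsp_iff)
  then have o: "N$0$0 * N$1$1 + N$2$0 * N$3$1 - N$3$0 * N$2$1 = l" using a1 by (simp add: omf_def)
  have step: "p N = 0" if ex: "\<And>s. xf (lin N (TB u0 u1 u2 u3 N) s) = s * k" and k: "k \<noteq> 0" for u0 u1 u2 u3 k
  proof (rule curve_arg2[OF p])
    fix s :: complex assume "s \<noteq> 0"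
    then have "xf (lin N (TB u0 u1 u2 u3 N) s) \<noteq> 0" using ex k by simp
    then show "p (lin N (TB u0 u1 u2 u3 N) s) = 0" using dens1[OF p G curve_gsp[OF g] l] by blast
  qed
  show ?thesis
  proof (cases "N$0$0 = 0")
    case False
    show ?thesis
      by (rule step[of 0 1 0 0 "- N$0$0"]) (use False a1 in \<open>simp_all add: xf_def TB_def\<close>)
  next
    case a0: True
    show ?thesis
    proof (cases "N$3$0 = 0")
      case False
      show ?thesis
        by (rule step[of 0 1 1 0 "N$3$0"]) (use False a1 a0 in \<open>simp_all add: xf_def TB_def\<close>)
    next
      case a3: True
      then have "N$2$0 \<noteq> 0" using o a0 l by auto
      then show ?thesis
        by (intro step[of 0 1 0 1 "- N$2$0"]) (use a1 a0 a3 in \<open>simp_all add: xf_def TB_def\<close>)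
    qed
  qed
qed

lemma dens_cone:
  assumes p: "polyfun p" and G: "GV p" and M: "M \<in> coneSp4"
  shows "p M = 0"
proof (rule cone_vanish[OF M p])
  fix N assume "N \<in> cS"
  then obtain c M0 where N: "N = smat c M0" and M0: "gsp 1 M0" unfolding cS_def Sp4_gsp by blast
  have gs: "gsp (c^2) (smat c M0)" for c using M0 unfolding gsp_entry omf_smat by simp
  have "p (smat c M0) = 0" if "c \<noteq> 0" for c
    using dens2[OF p G gs] that by simp
  moreover have "p (smat 0 M0) = 0"
  proof -
    have e: "lin (smat 0 M0) M0 s = smat s M0" for s by (simp add: vec_eq_iff smat_def)
    have "p (smat 0 M0) = 0" using curve_arg2[OF p, of "smat 0 M0" M0]
      using dens2[OF p G gs] e by simp
    then show ?thesis .
  qed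
  ultimately show "p N = 0" unfolding N by (cases "c = 0") auto
qed


lemma low_coeffs:
  fixes K :: "nat \<Rightarrow> complex" and Bd :: real
  assumes bd: "\<And>s::real. 0 < s \<Longrightarrow> s < 1 \<Longrightarrow> norm (\<Sum>i\<le>n. K i * of_real s ^ i) \<le> Bd * s^E"
  shows "j < E \<Longrightarrow> j \<le> n \<Longrightarrow> K j = 0"
proof (induction j rule: less_induct)
  case (less j)
  have IH: "K i = 0" if "i < j" for i using less that by simp
  define h where "h s = (\<Sum>i\<in>{j..n}. K i * of_real s ^ (i - j))" for s :: real
  have split: "(\<Sum>i\<le>n. K i * of_real s ^ i) = of_real s ^ j * h s" for s :: real
  proof -
    have "(\<Sum>i\<le>n. K i * of_real s ^ i) = (\<Sum>i\<in>{j..n}. K i * of_real s ^ i)"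
      by (rule sum.mono_neutral_right) (use IH in auto)
    also have "\<dots> = (\<Sum>i\<in>{j..n}. of_real s ^ j * (K i * of_real s ^ (i - j)))"
      by (intro sum.cong refl) (simp add: power_add[symmetric] mult_ac)
    finally show ?thesis by (simp add: h_def sum_distrib_left)
  qed
  have lim1: "(h \<longlongrightarrow> h 0) (at_right 0)"
    unfolding h_def by (intro tendsto_intros)
  have h0: "h 0 = K j"
  proof -
    have "h 0 = (\<Sum>i\<in>{j..n}. if i = j then K i else 0)"
      unfolding h_def by (intro sum.cong refl) auto
    also have "\<dots> = K j" using less by simp
    finally show ?thesis .
  qed
  have bnd: "norm (h s) \<le> Bd * s ^ (E - j)" if "0 < s" "s < 1" for s :: real
  proof -
    have "s ^ j * norm (h s) \<le> Bd * s ^ E" using bd[OF that] split[of s]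
      using that by (simp add: norm_mult norm_power)
    also have "\<dots> = s ^ j * (Bd * s ^ (E - j))" using less
      by (simp add: power_add[symmetric])
    finally show ?thesis using that by simp
  qed
  have lim2: "(h \<longlongrightarrow> 0) (at_right 0)"
  proof (rule Lim_null_comparison)
    show "\<forall>\<^sub>F s in at_right 0. norm (h s) \<le> Bd * s ^ (E - j)"
      unfolding eventually_at_right_field using bnd by (intro exI[of _ 1]) auto
    have "((\<lambda>s::real. Bd * s ^ (E - j)) \<longlongrightarrow> Bd * 0 ^ (E - j)) (at_right 0)"
      by (intro tendsto_intros)
    moreover have "Bd * (0::real) ^ (E - j) = 0" using less by simp
    ultimately show "((\<lambda>s::real. Bd * s ^ (E - j)) \<longlongrightarrow> 0) (at_right 0)" by simp
  qed
  show ?case using tendsto_unique[OF _ lim1 lim2] h0 by simp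
qed


lemma laurent_vanish:
  fixes I :: "'i set" and A :: "'i \<Rightarrow> int" and G :: "'i \<Rightarrow> complex" and E :: nat and Bd :: real
  assumes fin: "finite I" and lowb: "\<And>i. i \<in> I \<Longrightarrow> - int E \<le> A i" and upb: "\<And>i. i \<in> I \<Longrightarrow> A i \<le> int E"
    and bound: "\<And>s::real. 0 < s \<Longrightarrow> s < 1 \<Longrightarrow> norm (\<Sum>i\<in>I. G i * of_real s powi A i) \<le> Bd"
    and a: "a < 0"
  shows "(\<Sum>i\<in>{i\<in>I. A i = a}. G i) = 0"
proof (cases "a < - int E")
  case True
  then have e: "{i\<in>I. A i = a} = {}" using lowb by force
  show ?thesis unfolding e by (rule sum.empty)
next
  case False
  define K where "K j = (\<Sum>i\<in>{i\<in>I. nat (A i + int E) = j}. G i)" for j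
  have key: "(\<Sum>j\<le>2*E. K j * of_real s ^ j) = of_real s ^ E * (\<Sum>i\<in>I. G i * of_real s powi A i)"
    if s: "0 < s" for s :: real
  proof -
    have "of_real s ^ E * (\<Sum>i\<in>I. G i * of_real s powi A i) = (\<Sum>i\<in>I. G i * of_real s ^ nat (A i + int E))"
    proof -
      have "of_real s ^ E * (G i * of_real s powi A i) = G i * of_real s ^ nat (A i + int E)" if "i \<in> I" for i
      proof -
        have "(of_real s :: complex) ^ E * of_real s powi A i = of_real s powi (int E + A i)"
          using s by (simp add: power_int_add)
        also have "\<dots> = of_real s ^ nat (A i + int E)"
          using lowb[OF that] by (metis add.commute add_le_cancel_left diff_ge_0_iff_ge diff_minus_eq_add
             nat_0_le power_int_of_nat)
        finally show ?thesis by (simp add: mult_ac)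
      qed
      then show ?thesis unfolding sum_distrib_left by (rule sum.cong[OF refl])
    qed
    also have "\<dots> = (\<Sum>j\<le>2*E. \<Sum>i\<in>{i\<in>I. nat (A i + int E) = j}. G i * of_real s ^ nat (A i + int E))"
      by (rule sum.group[symmetric]) (use fin upb in \<open>auto simp: nat_le_iff\<close>)
    also have "\<dots> = (\<Sum>j\<le>2*E. K j * of_real s ^ j)"
      unfolding K_def by (intro sum.cong refl) (simp add: sum_distrib_right)
    finally show ?thesis by simp
  qed
  have bd: "norm (\<Sum>j\<le>2*E. K j * of_real s ^ j) \<le> Bd * s ^ E" if "0 < s" "s < 1" for s :: real
    using key[OF that(1)] bound[OF that] that by (simp add: norm_mult norm_power mult_ac mult_left_mono)
  define j where "j = nat (a + int E)"
  have "j < E" "j \<le> 2 * E" using a False unfolding j_def by auto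
  then have "K j = 0" using low_coeffs[OF bd] by blast
  moreover have "{i\<in>I. nat (A i + int E) = j} = {i\<in>I. A i = a}"
  proof (intro Collect_cong conj_cong refl)
    fix i assume "i \<in> I"
    then have "- int E \<le> A i" by (rule lowb)
    then have "0 \<le> A i + int E" "0 \<le> a + int E" using False by linarith+
    then show "(nat (A i + int E) = j) = (A i = a)" unfolding j_def by (simp add: eq_nat_nat_iff)
  qed
  ultimately show ?thesis unfolding K_def by simp
qed

lemma laurent_drop:
  fixes I :: "'i set" and A :: "'i \<Rightarrow> int" and G :: "'i \<Rightarrow> complex"
  assumes fin: "finite I" and van: "\<And>a. a < 0 \<Longrightarrow> (\<Sum>i\<in>{i\<in>I. A i = a}. G i) = 0"
  shows "(\<Sum>i\<in>I. G i * z powi A i) = (\<Sum>i\<in>{i\<in>I. 0 \<le> A i}. G i * z powi A i)"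
proof -
  let ?S = "{i\<in>I. A i < 0}"
  have "I = {i\<in>I. 0 \<le> A i} \<union> ?S" by auto
  then have "(\<Sum>i\<in>I. G i * z powi A i) = (\<Sum>i\<in>{i\<in>I. 0 \<le> A i}. G i * z powi A i) + (\<Sum>i\<in>?S. G i * z powi A i)"
    using fin by (metis (no_types, lifting) sum.union_disjoint finite_Un disjoint_iff mem_Collect_eq not_le)
  moreover have "(\<Sum>i\<in>?S. G i * z powi A i) = 0"
  proof -
    have "(\<Sum>i\<in>?S. G i * z powi A i) = (\<Sum>a\<in>A ` ?S. \<Sum>i\<in>{i\<in>?S. A i = a}. G i * z powi A i)"
      by (rule sum.group[symmetric]) (use fin in auto)
    also have "\<dots> = (\<Sum>a\<in>A ` ?S. z powi a * (\<Sum>i\<in>{i\<in>I. A i = a}. G i))"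
    proof (intro sum.cong refl)
      fix a assume "a \<in> A ` ?S"
      then have "a < 0" by auto
      then have "{i\<in>?S. A i = a} = {i\<in>I. A i = a}" by auto
      then show "(\<Sum>i\<in>{i\<in>?S. A i = a}. G i * z powi A i) = z powi a * (\<Sum>i\<in>{i\<in>I. A i = a}. G i)"
        by (simp add: sum_distrib_left mult_ac)
    qed
    also have "\<dots> = 0" using van by (intro sum.neutral) auto
    finally show ?thesis .
  qed
  ultimately show ?thesis by simp
qed


type_synonym tt = "complex \<times> nat \<times> nat \<times> nat \<times> nat"

definition tm :: "tt \<Rightarrow> complex \<Rightarrow> complex \<Rightarrow> complex \<Rightarrow> complex \<Rightarrow> complex" where
  "tm t a b g h = (case t of (c,i,j,k,l) \<Rightarrow> c * a^i * b^j * g^k * h^l)"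
definition tdeg :: "tt \<Rightarrow> nat" where
  "tdeg t = (case t of (c,i,j,k,l) \<Rightarrow> i + j + k + l)"
definition tmul :: "tt \<Rightarrow> tt \<Rightarrow> tt" where
  "tmul t t' = (case t of (c,i,j,k,l) \<Rightarrow> case t' of (c',i',j',k',l') \<Rightarrow> (c*c', i+i', j+j', k+k', l+l'))"

lemma tm_tmul: "tm (tmul t t') a b g h = tm t a b g h * tm t' a b g h"
  by (cases t; cases t') (simp add: tm_def tmul_def power_add mult_ac)

lemma tdeg_tmul: "tdeg (tmul t t') = tdeg t + tdeg t'"
  by (cases t; cases t') (simp add: tdeg_def tmul_def)

lemma sum_tmul: "(\<Sum>t\<leftarrow>concat (map (\<lambda>x. map (tmul x) L2) L1). tm t a b g h)
    = (\<Sum>t\<leftarrow>L1. tm t a b g h) * (\<Sum>t\<leftarrow>L2. tm t a b g h)"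
proof (induction L1)
  case Nil then show ?case by simp
next
  case (Cons x L1)
  have "(\<Sum>t\<leftarrow>map (tmul x) L2. tm t a b g h) = tm x a b g h * (\<Sum>t\<leftarrow>L2. tm t a b g h)"
    by (simp add: tm_tmul sum_list_const_mult o_def)
  then show ?case using Cons by (simp add: algebra_simps)
qed

lemma nmat_entry: "nmat a b g h $ i $ j = (if i = 1 \<and> j = 0 then a else if i = 0 \<and> j = 1 then b
   else if i = 3 \<and> j = 2 then g else if i = 2 \<and> j = 3 then h else 0)"
proof -
  have "\<forall>i j. nmat a b g h $ i $ j = (if i = 1 \<and> j = 0 then a else if i = 0 \<and> j = 1 then b
   else if i = 3 \<and> j = 2 then g else if i = 2 \<and> j = 3 then h else 0)"
    unfolding all4 by simp
  then show ?thesis by blast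
qed

lemma hpoly_expand: "hpoly d f \<Longrightarrow> \<exists>L. (\<forall>t\<in>set L. tdeg t = d) \<and>
    (\<forall>a b g h. f (nmat a b g h) = (\<Sum>t\<leftarrow>L. tm t a b g h))"
proof (induction rule: hpoly.induct)
  case (hp_const c)
  show ?case by (rule exI[of _ "[(c,0,0,0,0)]"]) (simp add: tm_def tdeg_def)
next
  case (hp_coord i j)
  define L :: "tt list" where "L = (if i = 1 \<and> j = 0 then [(1,1,0,0,0)] else if i = 0 \<and> j = 1 then [(1,0,1,0,0)]
   else if i = 3 \<and> j = 2 then [(1,0,0,1,0)] else if i = 2 \<and> j = 3 then [(1,0,0,0,1)] else [])"
  have "\<forall>t\<in>set L. tdeg t = 1" unfolding L_def by (simp add: tdeg_def)
  moreover have "\<forall>a b g h. nmat a b g h $ i $ j = (\<Sum>t\<leftarrow>L. tm t a b g h)"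
  proof (intro allI)
    fix a b g h
    consider "i = 1 \<and> j = 0" | "\<not> (i = 1 \<and> j = 0)" "i = 0 \<and> j = 1"
      | "\<not> (i = 1 \<and> j = 0)" "\<not> (i = 0 \<and> j = 1)" "i = 3 \<and> j = 2"
      | "\<not> (i = 1 \<and> j = 0)" "\<not> (i = 0 \<and> j = 1)" "\<not> (i = 3 \<and> j = 2)" "i = 2 \<and> j = 3"
      | "\<not> (i = 1 \<and> j = 0)" "\<not> (i = 0 \<and> j = 1)" "\<not> (i = 3 \<and> j = 2)" "\<not> (i = 2 \<and> j = 3)"
      by blast
    then show "nmat a b g h $ i $ j = (\<Sum>t\<leftarrow>L. tm t a b g h)"
    proof cases
      case 1 then show ?thesis by (simp only: L_def nmat_entry if_True) (simp add: tm_def)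
    next
      case 2 then show ?thesis by (simp only: L_def nmat_entry if_True if_False) (simp add: tm_def)
    next
      case 3 then show ?thesis by (simp only: L_def nmat_entry if_True if_False) (simp add: tm_def)
    next
      case 4 then show ?thesis by (simp only: L_def nmat_entry if_True if_False) (simp add: tm_def)
    next
      case 5 then show ?thesis by (simp only: L_def nmat_entry if_True if_False) simp
    qed
  qed
  ultimately show ?case by blast
next
  case (hp_add d f g)
  then obtain L1 L2 where "\<forall>t\<in>set L1. tdeg t = d" "\<forall>a b g h. f (nmat a b g h) = (\<Sum>t\<leftarrow>L1. tm t a b g h)"
    "\<forall>t\<in>set L2. tdeg t = d" "\<forall>a b g' h. g (nmat a b g' h) = (\<Sum>t\<leftarrow>L2. tm t a b g' h)" by metis
  then show ?case by (intro exI[of _ "L1 @ L2"]) auto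
next
  case (hp_mult d f e g)
  then obtain L1 L2 where "\<forall>t\<in>set L1. tdeg t = d" "\<forall>a b g h. f (nmat a b g h) = (\<Sum>t\<leftarrow>L1. tm t a b g h)"
    "\<forall>t\<in>set L2. tdeg t = e" "\<forall>a b g' h. g (nmat a b g' h) = (\<Sum>t\<leftarrow>L2. tm t a b g' h)" by metis
  then show ?case
    by (intro exI[of _ "concat (map (\<lambda>x. map (tmul x) L2) L1)"]) (auto simp: sum_tmul tdeg_tmul)
qed

definition tc :: "tt \<Rightarrow> complex" where "tc t = (case t of (c,i,j,k,l) \<Rightarrow> c * (-1)^(j+l))"
definition tA :: "tt \<Rightarrow> int" where "tA t = (case t of (c,i,j,k,l) \<Rightarrow> int i + int l - int j - int k)"
definition tB :: "tt \<Rightarrow> int" where "tB t = (case t of (c,i,j,k,l) \<Rightarrow> int k - int l)"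
definition tC :: "tt \<Rightarrow> nat" where "tC t = (case t of (c,i,j,k,l) \<Rightarrow> j + l)"

lemma tm_laurent:
  assumes x: "x \<noteq> 0" and D: "D \<noteq> 0"
  shows "tm t x (- l / x) (D / x) (- l / (D / x)) = tc t * x powi tA t * D powi tB t * l ^ tC t"
proof -
  obtain c i j k m where t: "t = (c,i,j,k,m)" by (cases t) auto
  have hx: "x powi (int i + int m - int j - int k) = x^i * x^m / (x^j * x^k)"
    using x by (simp add: power_int_diff power_int_add)
  have hD: "D powi (int k - int m) = D^k / D^m"
    using D by (simp add: power_int_diff)
  have "tm t x (- l / x) (D / x) (- l / (D / x)) = c * x^i * (- l / x)^j * (D / x)^k * (- l * x / D)^m"
    by (simp add: t tm_def)
  also have "\<dots> = c * (-1)^(j+m) * (x^i * x^m / (x^j * x^k)) * (D^k / D^m) * l^(j+m)"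
  proof -
    have "(- l / x) = (-1) * (l / x)" by simp
    then have h1: "(- l / x)^j = (-1)^j * (l^j / x^j)"
      by (simp only: power_mult_distrib power_divide)
    have h2: "(D / x)^k = D^k / x^k" by (rule power_divide)
    have "(- l * x / D) = (-1) * (l * x / D)" by simp
    then have h3: "(- l * x / D)^m = (-1)^m * (l^m * x^m / D^m)"
      by (simp only: power_mult_distrib power_divide)
    define X1 where "X1 = (-1::complex)^j"
    define X2 where "X2 = (-1::complex)^m"
    have "(-1::complex)^(j+m) = X1 * X2" unfolding X1_def X2_def by (simp add: power_add)
    moreover have "l^(j+m) = l^j * l^m" by (simp add: power_add)
    ultimately show ?thesis unfolding h1 h2 h3 X1_def[symmetric] X2_def[symmetric]
      using x D by (simp add: field_simps)
  qed
  finally show ?thesis by (simp add: t tc_def tA_def tB_def tC_def hx hD)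
qed

lemma tdeg_weight: "tdeg t = d \<Longrightarrow> tA t + 2 * tB t + 2 * int (tC t) = int d"
  by (cases t) (simp add: tdeg_def tA_def tB_def tC_def)

lemma tA_bounds: "tdeg t = d \<Longrightarrow> - int d \<le> tA t \<and> tA t \<le> int d"
  by (cases t) (auto simp: tdeg_def tA_def)
lemma tB_bounds: "tdeg t = d \<Longrightarrow> - int d \<le> tB t \<and> tB t \<le> int d"
  by (cases t) (auto simp: tdeg_def tB_def)

lemma pf_bounded: "polyfun p \<Longrightarrow> \<exists>K. \<forall>M. (\<forall>i j. norm (M$i$j) \<le> R) \<longrightarrow> norm (p M) \<le> K"
proof (induction rule: polyfun.induct)
  case (pf_const c) then show ?case by auto
next
  case (pf_coord i j) then show ?case by auto
next
  case (pf_add f g)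
  then obtain K1 K2 where "\<forall>M::mat4. (\<forall>i j. norm (M$i$j) \<le> R) \<longrightarrow> norm (f M) \<le> K1"
    "\<forall>M::mat4. (\<forall>i j. norm (M$i$j) \<le> R) \<longrightarrow> norm (g M) \<le> K2" by blast
  then show ?case by (intro exI[of _ "K1 + K2"]) (meson add_mono norm_triangle_le)
next
  case (pf_mult f g)
  then obtain K1 K2 where k: "\<forall>M::mat4. (\<forall>i j. norm (M$i$j) \<le> R) \<longrightarrow> norm (f M) \<le> K1"
    "\<forall>M::mat4. (\<forall>i j. norm (M$i$j) \<le> R) \<longrightarrow> norm (g M) \<le> K2" by blast
  show ?case
  proof (intro exI[of _ "K1 * K2"] allI impI)
    fix M :: mat4 assume "\<forall>i j. norm (M$i$j) \<le> R"
    then have "norm (f M) \<le> K1" "norm (g M) \<le> K2" using k by auto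
    then show "norm (f M * g M) \<le> K1 * K2"
      by (simp add: norm_mult mult_mono')
  qed
qed

definition N1 :: "real \<Rightarrow> complex \<Rightarrow> complex \<Rightarrow> mat4" where
  "N1 s D l = mk4 0 0 0 (l/D)  (of_real s) 0 (-D) 0  0 (-l) 0 (- of_real s * l / D)  1 0 0 0"
definition N2 :: "real \<Rightarrow> complex \<Rightarrow> complex \<Rightarrow> mat4" where
  "N2 s x l = mk4 0 (-l/x) 0 0  x 0 0 0  0 0 1 0  0 0 (of_real s / x) l"

lemma N1_props: "D \<noteq> 0 \<Longrightarrow> gsp l (N1 s D l) \<and> xf (N1 s D l) = of_real s \<and> Df (N1 s D l) = D"
  unfolding gsp_iff omf_def N1_def xf_def Df_def by simp

lemma N2_props: "x \<noteq> 0 \<Longrightarrow> gsp l (N2 s x l) \<and> xf (N2 s x l) = x \<and> Df (N2 s x l) = of_real s"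
  unfolding gsp_iff omf_def N2_def xf_def Df_def by simp

lemma N1_bounded: "0 < s \<Longrightarrow> s < 1 \<Longrightarrow> \<forall>i j. norm (N1 s D l $ i $ j) \<le> 1 + norm D + norm l + norm (l / D)"
proof -
  assume s: "0 < s" "s < 1"
  have e: "norm (- (of_real s * l / D)) = s * norm (l / D)"
    using s by (simp add: norm_mult norm_divide)
  have a: "norm (- (of_real s * l / D)) \<le> norm (l / D)"
    unfolding e using s mult_left_le_one_le[of "norm (l / D)" s] by simp
  have n: "0 \<le> norm l" "0 \<le> norm D" "0 \<le> norm (l/D)" by simp_all
  show ?thesis unfolding all4 N1_def using a s n
    by (simp del: norm_ge_zero)
qed

lemma N2_bounded: "0 < s \<Longrightarrow> s < 1 \<Longrightarrow> \<forall>i j. norm (N2 s x l $ i $ j) \<le> 1 + norm x + norm l + norm (l / x) + norm (1 / x)"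
proof -
  assume s: "0 < s" "s < 1"
  have a: "norm (of_real s / x) \<le> norm (1 / x)"
    using s by (simp add: norm_divide divide_right_mono)
  have n: "0 \<le> norm l" "0 \<le> norm x" "0 \<le> norm (l/x)" "0 \<le> norm (1/x)" by simp_all
  show ?thesis unfolding all4 N2_def using a s n
    by (simp del: norm_ge_zero)
qed


lemma powi_nat: "0 \<le> a \<Longrightarrow> (z::complex) powi a = z ^ nat a"
  by (metis nat_0_le power_int_of_nat)

lemma upper:
  assumes FI: "F \<in> inv_deg d"
  shows "F \<in> FV.span (Bd d)"
proof -
  obtain f where hf: "hpoly d f" and Fdef: "F = (\<lambda>M. if M \<in> coneSp4 then f M else 0)"
    and Finv: "\<forall>g\<in>USp4. \<forall>h\<in>USp4. \<forall>M\<in>coneSp4. F (matrix_inv g ** M ** h) = F M"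
    using FI unfolding inv_deg_def coord_ring_deg_def by blast
  have pf: "polyfun f" using hf by (rule hpoly_polyfun)
  have Uinv: "F (Uel t1 t2 t3 p ** M ** Uel s1 s2 s3 r) = F M" if "M \<in> coneSp4" for t1 t2 t3 p s1 s2 s3 r M
  proof -
    obtain g where g: "g \<in> USp4" "matrix_inv g = Uel t1 t2 t3 p" using Uel_is_inv by blast
    show ?thesis using Finv g Uel_USp4 that by metis
  qed
  obtain L where Ldeg: "\<forall>t\<in>set L. tdeg t = d" and Lexp: "\<forall>a b g h. f (nmat a b g h) = (\<Sum>t\<leftarrow>L. tm t a b g h)"
    using hpoly_expand[OF hf] by blast
  define I where "I = {..<length L}"
  define cc where "cc i = tc (L!i)" for i
  define A where "A i = tA (L!i)" for i
  define B where "B i = tB (L!i)" for i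
  define C where "C i = tC (L!i)" for i
  have fin: "finite I" by (simp add: I_def)
  have degI: "tdeg (L!i) = d" if "i \<in> I" for i using Ldeg that unfolding I_def by simp
  have E2: "f N = (\<Sum>i\<in>I. cc i * xf N powi A i * Df N powi B i * l ^ C i)"
    if g: "gsp l N" and l: "l \<noteq> 0" and x: "xf N \<noteq> 0" and D: "Df N \<noteq> 0" for N l
  proof -
    let ?n = "nmat (xf N) (- l / xf N) (Df N / xf N) (- l / (Df N / xf N))"
    have e: "Df N / xf N * (- l / (Df N / xf N)) = xf N * (- l / xf N)" using x D by simp
    have "gsp (- (xf N * (- l / xf N))) ?n" by (rule nmat_gsp[OF e])
    then have "gsp l ?n" using x by simp
    then have nc: "?n \<in> coneSp4" using l by (rule gsp_cone)
    have Nc: "N \<in> coneSp4" using g l by (rule gsp_cone)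
    have "F N = F ?n" by (rule bruhat[OF Uinv g l x D])
    then have "f N = f ?n" using nc Nc Fdef by simp
    also have "\<dots> = (\<Sum>t\<leftarrow>L. tm t (xf N) (- l / xf N) (Df N / xf N) (- l / (Df N / xf N)))"
      using Lexp by blast
    also have "\<dots> = (\<Sum>i\<in>I. tm (L!i) (xf N) (- l / xf N) (Df N / xf N) (- l / (Df N / xf N)))"
      unfolding I_def sum_list_sum_nth by (simp add: atLeast0LessThan)
    also have "\<dots> = (\<Sum>i\<in>I. cc i * xf N powi A i * Df N powi B i * l ^ C i)"
      unfolding cc_def A_def B_def C_def using tm_laurent[OF x D] by simp
    finally show ?thesis .
  qed
  have E3: "(\<Sum>i\<in>{i\<in>I. A i = a}. cc i * D0 powi B i * l0 ^ C i) = 0"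
    if a: "a < 0" and D0: "D0 \<noteq> 0" and l0: "l0 \<noteq> 0" for a D0 l0
  proof -
    obtain K where K: "\<forall>M. (\<forall>i j. norm (M$i$j) \<le> 1 + norm D0 + norm l0 + norm (l0/D0)) \<longrightarrow> norm (f M) \<le> K"
      using pf_bounded[OF pf] by blast
    show ?thesis
    proof (rule laurent_vanish[where E = d and Bd = K and A = A and I = I, OF fin _ _ _ a])
      fix i assume "i \<in> I" then show "- int d \<le> A i" "A i \<le> int d"
        using tA_bounds[OF degI] unfolding A_def by auto
    next
      fix s :: real assume s: "0 < s" "s < 1"
      have pr: "gsp l0 (N1 s D0 l0)" "xf (N1 s D0 l0) = of_real s" "Df (N1 s D0 l0) = D0"
        using N1_props[OF D0] by auto
      have "f (N1 s D0 l0) = (\<Sum>i\<in>I. cc i * of_real s powi A i * D0 powi B i * l0 ^ C i)"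
        using E2[OF pr(1) l0] pr s D0 by simp
      also have "\<dots> = (\<Sum>i\<in>I. cc i * D0 powi B i * l0 ^ C i * of_real s powi A i)"
        by (simp add: mult_ac)
      finally have "norm (\<Sum>i\<in>I. cc i * D0 powi B i * l0 ^ C i * of_real s powi A i) = norm (f (N1 s D0 l0))"
        by simp
      also have "\<dots> \<le> K" using K N1_bounded[OF s] by blast
      finally show "norm (\<Sum>i\<in>I. cc i * D0 powi B i * l0 ^ C i * of_real s powi A i) \<le> K" .
    qed
  qed
  define I2 where "I2 = {i\<in>I. 0 \<le> A i}"
  have fin2: "finite I2" using fin by (simp add: I2_def)
  have E3': "(\<Sum>i\<in>I. cc i * x powi A i * D powi B i * l ^ C i) = (\<Sum>i\<in>I2. cc i * x powi A i * D powi B i * l ^ C i)"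
    if D: "D \<noteq> 0" and l: "l \<noteq> 0" for x D l
  proof -
    have "(\<Sum>i\<in>I. (cc i * D powi B i * l ^ C i) * x powi A i) = (\<Sum>i\<in>{i\<in>I. 0 \<le> A i}. (cc i * D powi B i * l ^ C i) * x powi A i)"
      by (rule laurent_drop[OF fin]) (use E3 D l in blast)
    then show ?thesis unfolding I2_def by (simp add: mult_ac)
  qed
  have E4: "(\<Sum>i\<in>{i\<in>I2. B i = b}. cc i * x0 powi A i * l0 ^ C i) = 0"
    if b: "b < 0" and x0: "x0 \<noteq> 0" and l0: "l0 \<noteq> 0" for b x0 l0
  proof -
    obtain K where K: "\<forall>M. (\<forall>i j. norm (M$i$j) \<le> 1 + norm x0 + norm l0 + norm (l0/x0) + norm (1/x0)) \<longrightarrow> norm (f M) \<le> K"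
      using pf_bounded[OF pf] by blast
    show ?thesis
    proof (rule laurent_vanish[where E = d and Bd = K and A = B and I = I2, OF fin2 _ _ _ b])
      fix i assume "i \<in> I2" then show "- int d \<le> B i" "B i \<le> int d"
        using tB_bounds[OF degI] unfolding B_def I2_def by auto
    next
      fix s :: real assume s: "0 < s" "s < 1"
      have pr: "gsp l0 (N2 s x0 l0)" "xf (N2 s x0 l0) = x0" "Df (N2 s x0 l0) = of_real s"
        using N2_props[OF x0] by auto
      have s0: "(of_real s :: complex) \<noteq> 0" using s by simp
      have "f (N2 s x0 l0) = (\<Sum>i\<in>I. cc i * x0 powi A i * of_real s powi B i * l0 ^ C i)"
        using E2[OF pr(1) l0] pr s0 x0 by simp
      also have "\<dots> = (\<Sum>i\<in>I2. cc i * x0 powi A i * of_real s powi B i * l0 ^ C i)"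
        by (rule E3'[OF s0 l0])
      also have "\<dots> = (\<Sum>i\<in>I2. cc i * x0 powi A i * l0 ^ C i * of_real s powi B i)"
        by (simp add: mult_ac)
      finally have "norm (\<Sum>i\<in>I2. cc i * x0 powi A i * l0 ^ C i * of_real s powi B i) = norm (f (N2 s x0 l0))"
        by simp
      also have "\<dots> \<le> K" using K N2_bounded[OF s] by blast
      finally show "norm (\<Sum>i\<in>I2. cc i * x0 powi A i * l0 ^ C i * of_real s powi B i) \<le> K" .
    qed
  qed
  define I3 where "I3 = {i\<in>I2. 0 \<le> B i}"
  have fin3: "finite I3" using fin2 by (simp add: I3_def)
  have E4': "(\<Sum>i\<in>I2. cc i * x powi A i * D powi B i * l ^ C i) = (\<Sum>i\<in>I3. cc i * x powi A i * D powi B i * l ^ C i)"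
    if x: "x \<noteq> 0" and l: "l \<noteq> 0" for x D l
  proof -
    have "(\<Sum>i\<in>I2. (cc i * x powi A i * l ^ C i) * D powi B i) = (\<Sum>i\<in>{i\<in>I2. 0 \<le> B i}. (cc i * x powi A i * l ^ C i) * D powi B i)"
      by (rule laurent_drop[OF fin2]) (use E4 x l in blast)
    then show ?thesis unfolding I3_def by (simp add: mult_ac)
  qed
  define q where "q M = (\<Sum>i\<in>I3. cc i * monm (nat (A i)) (nat (B i)) (C i) M)" for M
  have pq: "polyfun (\<lambda>M. f M - q M)"
    unfolding q_def by (intro pf_minus pf pf_sum fin3 pf_cmult pf_mono)
  have GVq: "GV (\<lambda>M. f M - q M)"
    unfolding GV_def
  proof (intro allI impI)
    fix N l assume g: "gsp l N" and l: "l \<noteq> 0" and x: "xf N \<noteq> 0" and D: "Df N \<noteq> 0"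
    have qN: "qf N = l" using g by (simp add: gsp_iff qf_def)
    have "f N = (\<Sum>i\<in>I3. cc i * xf N powi A i * Df N powi B i * l ^ C i)"
      using E2[OF g l x D] E3'[OF D l] E4'[OF x l] by simp
    also have "\<dots> = q N" unfolding q_def monm_def qN
    proof (intro sum.cong refl)
      fix i assume "i \<in> I3"
      then have "0 \<le> A i" "0 \<le> B i" unfolding I3_def I2_def by auto
      then show "cc i * xf N powi A i * Df N powi B i * l ^ C i = cc i * (xf N ^ nat (A i) * Df N ^ nat (B i) * l ^ C i)"
        by (simp add: powi_nat mult_ac)
    qed
    finally show "f N - q N = 0" by simp
  qed
  have onc: "f M = q M" if "M \<in> coneSp4" for M
    using dens_cone[OF pq GVq that] by simp
  have Bvi: "Bv d (nat (B i), C i) = Bf (nat (A i)) (nat (B i)) (C i)" and idxi: "(nat (B i), C i) \<in> idx d"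
    if "i \<in> I3" for i
  proof -
    have "0 \<le> A i" "0 \<le> B i" "i \<in> I" using that unfolding I3_def I2_def by auto
    moreover have "A i + 2 * B i + 2 * int (C i) = int d" using tdeg_weight[OF degI[OF \<open>i \<in> I\<close>]]
      unfolding A_def B_def C_def .
    ultimately have w: "nat (A i) + 2 * nat (B i) + 2 * C i = d" by linarith
    then have w2: "d - 2 * nat (B i) - 2 * C i = nat (A i)" by (simp add: w[symmetric])
    show "Bv d (nat (B i), C i) = Bf (nat (A i)) (nat (B i)) (C i)"
      unfolding Bv_def using w2 by simp
    show "(nat (B i), C i) \<in> idx d" unfolding idx_def using w by simp
  qed
  have Fsum: "F = (\<Sum>i\<in>I3. (\<lambda>(c::complex) (f::mat4 \<Rightarrow> complex) x. c * f x) (cc i) (Bv d (nat (B i), C i)))"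
  proof (rule ext)
    fix M
    show "F M = (\<Sum>i\<in>I3. (\<lambda>(c::complex) (f::mat4 \<Rightarrow> complex) x. c * f x) (cc i) (Bv d (nat (B i), C i))) M"
      unfolding sum_fun_apply
    proof (cases "M \<in> coneSp4")
      case True
      then show "F M = (\<Sum>i\<in>I3. (\<lambda>(c::complex) (f::mat4 \<Rightarrow> complex) x. c * f x) (cc i) (Bv d (nat (B i), C i)) M)"
        using onc[OF True] Bvi by (simp add: Fdef q_def Bf_def)
    next
      case False
      then show "F M = (\<Sum>i\<in>I3. (\<lambda>(c::complex) (f::mat4 \<Rightarrow> complex) x. c * f x) (cc i) (Bv d (nat (B i), C i)) M)"
        using Bvi by (simp add: Fdef Bf_def)
    qed
  qed
  show ?thesis unfolding Fsum
  proof (rule FV.span_sum)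
    fix i assume "i \<in> I3"
    then have "Bv d (nat (B i), C i) \<in> Bd d" unfolding Bd_def using idxi by blast
    then show "(\<lambda>(c::complex) (f::mat4 \<Rightarrow> complex) x. c * f x) (cc i) (Bv d (nat (B i), C i)) \<in> FV.span (Bd d)"
      by (intro FV.span_scale FV.span_base)
  qed
qed


lemma mult_1mXk: "fps_nth ((1 - fps_X^k) * f) n = fps_nth f n - (if n < k then 0 else fps_nth f (n - k))"
  for f :: "rat fps"
  by (simp add: algebra_simps fps_X_power_mult_right_nth)

lemma mult_1mX: "fps_nth ((1 - fps_X) * f) n = fps_nth f n - (if n = 0 then 0 else fps_nth f (n - 1))"
  for f :: "rat fps"
  using mult_1mXk[of 1 f n] by simp

lemma tri_Suc: "tri (Suc m) = tri m + (m + 2)"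
  by (simp add: tri_def)

lemma step1: "(1 - fps_X) * Abs_fps (\<lambda>d. of_nat (tri (d div 2)) :: rat)
   = Abs_fps (\<lambda>d. if even d then of_nat (d div 2 + 1) else 0)"
proof (rule fps_ext)
  fix n
  show "fps_nth ((1 - fps_X) * Abs_fps (\<lambda>d. of_nat (tri (d div 2)) :: rat)) n =
      fps_nth (Abs_fps (\<lambda>d. if even d then of_nat (d div 2 + 1) else 0)) n"
  proof (cases "n = 0")
    case True then show ?thesis by (simp add: mult_1mX tri_def)
  next
    case False
    then obtain m where "n = Suc m" using not0_implies_Suc by blast
    show ?thesis
    proof (cases "even m")
      case True
      then obtain j where "m = 2*j" by (rule evenE)
      then show ?thesis using \<open>n = Suc m\<close> by (simp add: mult_1mX)
    next
      case False
      then obtain j where "m = 2*j+1" by (rule oddE)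
      then have "n = 2 * Suc j" using \<open>n = Suc m\<close> by simp
      then show ?thesis by (simp add: mult_1mX tri_Suc)
    qed
  qed
qed

lemma step2: "(1 - fps_X^2) * Abs_fps (\<lambda>d. if even d then of_nat (d div 2 + 1) else 0 :: rat)
   = Abs_fps (\<lambda>d. if even d then 1 else 0)"
proof (rule fps_ext)
  fix n
  show "fps_nth ((1 - fps_X^2) * Abs_fps (\<lambda>d. if even d then of_nat (d div 2 + 1) else 0 :: rat)) n =
      fps_nth (Abs_fps (\<lambda>d. if even d then 1 else 0)) n"
  proof (cases "n < 2")
    case True then show ?thesis by (auto simp: mult_1mXk less_2_cases_iff)
  next
    case False
    then obtain m where "n = Suc (Suc m)" by (metis add_2_eq_Suc le_Suc_ex not_less)
    then show ?thesis
      by (cases "even m") (auto simp: mult_1mXk elim!: evenE oddE)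
  qed
qed

lemma step3: "(1 - fps_X^2) * Abs_fps (\<lambda>d. if even d then 1 else 0 :: rat) = 1"
proof (rule fps_ext)
  fix n
  show "fps_nth ((1 - fps_X^2) * Abs_fps (\<lambda>d. if even d then 1 else 0 :: rat)) n = fps_nth (1 :: rat fps) n"
  proof (cases "n < 2")
    case True then show ?thesis by (auto simp: mult_1mXk less_2_cases_iff)
  next
    case False
    then obtain m where "n = Suc (Suc m)" by (metis add_2_eq_Suc le_Suc_ex not_less)
    then show ?thesis by (simp add: mult_1mXk)
  qed
qed

lemma fps_main: "inverse ((1 - fps_X) * (1 - fps_X ^ 2) ^ 2) = Abs_fps (\<lambda>d. of_nat (tri (d div 2)) :: rat)"
proof (rule fps_inverse_unique)
  let ?A = "Abs_fps (\<lambda>d. of_nat (tri (d div 2)) :: rat)"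
  have "(1 - fps_X) * (1 - fps_X ^ 2) ^ 2 * ?A = (1 - fps_X^2) * ((1 - fps_X^2) * ((1 - fps_X) * ?A))"
    by (simp add: power2_eq_square mult_ac)
  also have "\<dots> = 1" by (simp only: step1 step2 step3)
  finally show "(1 - fps_X) * (1 - fps_X ^ 2) ^ 2 * ?A = 1" .
qed

theorem proposition5p3:
  shows "hilbert_series_inv = inverse ((1 - fps_X) * (1 - fps_X ^ 2) ^ 2)"
proof -
  have c: "cdim (inv_deg d) = tri (d div 2)" for d
  proof -
    have "card (Bd d) = FV.dim (inv_deg d)"
      by (rule FV.basis_card_eq_dim[OF Bd_sub _ Bd_indep]) (use upper in blast)
    then show ?thesis using cdim_FV card_Bd card_idx by simp
  qed
  have "hilbert_series_inv = Abs_fps (\<lambda>d. of_nat (tri (d div 2)) :: rat)"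
    unfolding hilbert_series_inv_def c ..
  also have "\<dots> = inverse ((1 - fps_X) * (1 - fps_X ^ 2) ^ 2)"
    by (rule fps_main[symmetric])
  finally show ?thesis .
qed

end
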